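(* Let $(p_n)$ be an arbitrary sequence of positive integers with $p_n\to+\infty$. Let $\mathbf{U}_{ni}$, $i=1,\ldots,n$, $n=1,2,\ldots$, be a triangular array such that, for each $n$, the random $p_n$-vectors $\mathbf{U}_{n1},\ldots,\mathbf{U}_{nn}$ are i.i.d. uniformly distributed on the unit sphere $\mathcal{S}^{p_n-1}=\{\mathbf{x}\in\mathbb{R}^{p_n}:\|\mathbf{x}\|=1\}$. Let $R_n=\frac{p_n}{n}\sum_{i,j=1}^n \mathbf{U}_{ni}'\mathbf{U}_{nj}$. Then $$R_n^{\rm St}=\frac{R_n-p_n}{\sqrt{2p_n}}=\frac{\sqrt{2p_n}}{n}\sum_{1\le i<j\le n}\mathbf{U}_{ni}'\mathbf{U}_{nj}$$ converges in distribution to the standard normal distribution as $n\to\infty$.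
   Context: No restriction is placed on how $p_n$ grows relative to $n$, other than $p_n\to\infty$. *)

theory Defs
  imports "HOL-Probability.Probability"
begin

text \<open>Euclidean space R^p modelled as functions nat => real (coordinates 0..p-1),
  with the product Borel structure / product Lebesgue measure.\<close>

definition euclid_space :: "nat \<Rightarrow> (nat \<Rightarrow> real) measure" where
  "euclid_space p = PiM {..<p} (\<lambda>_. borel)"

definition lebesgue_p :: "nat \<Rightarrow> (nat \<Rightarrow> real) measure" where
  "lebesgue_p p = PiM {..<p} (\<lambda>_. lborel)"

definition inner_p :: "nat \<Rightarrow> (nat \<Rightarrow> real) \<Rightarrow> (nat \<Rightarrow> real) \<Rightarrow> real" where
  "inner_p p x y = (\<Sum>k<p. x k * y k)"

definition norm_p :: "nat \<Rightarrow> (nat \<Rightarrow> real) \<Rightarrow> real" where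
  "norm_p p x = sqrt (inner_p p x x)"

definition unit_ball_p :: "nat \<Rightarrow> (nat \<Rightarrow> real) set" where
  "unit_ball_p p = {x \<in> space (lebesgue_p p). norm_p p x \<le> 1}"

definition sphere_proj :: "nat \<Rightarrow> (nat \<Rightarrow> real) \<Rightarrow> (nat \<Rightarrow> real)" where
  "sphere_proj p x = (\<lambda>i. if i < p then x i / norm_p p x else undefined)"

text \<open>Uniform distribution (normalised surface measure) on the unit sphere S^{p-1}:
  the cone measure, i.e. sigma(A) = lambda({t x : x in A, 0 < t <= 1}) / lambda(unit ball),
  realised as the push-forward of the uniform distribution on the unit ball under x |-> x/|x|.\<close>

definition unif_sphere :: "nat \<Rightarrow> (nat \<Rightarrow> real) measure" where
  "unif_sphere p = distr (uniform_measure (lebesgue_p p) (unit_ball_p p)) (euclid_space p) (sphere_proj p)"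

end

theory Submission
  imports Defs
begin


lemma sets_lebesgue_p: "sets (lebesgue_p p) = sets (euclid_space p)"
  unfolding lebesgue_p_def euclid_space_def by (intro sets_PiM_cong) auto

lemma space_lebesgue_p: "space (lebesgue_p p) = space (euclid_space p)"
  using sets_eq_imp_space_eq[OF sets_lebesgue_p] .

lemma space_euclid: "space (euclid_space p) = ({..<p} \<rightarrow>\<^sub>E UNIV)"
  by (simp add: euclid_space_def space_PiM)

lemma meas_coord[measurable]: "k < p \<Longrightarrow> (\<lambda>x. x k) \<in> borel_measurable (euclid_space p)"
  unfolding euclid_space_def by (rule measurable_component_singleton) auto

lemma meas_coordL[measurable]: "k < p \<Longrightarrow> (\<lambda>x. x k) \<in> borel_measurable (lebesgue_p p)"
  using meas_coord[of k p] by (simp add: measurable_cong_sets[OF sets_lebesgue_p refl])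

lemma meas_inner[measurable]: "inner_p p s \<in> borel_measurable (euclid_space p)"
  unfolding inner_p_def by measurable

lemma meas_inner2[measurable]: "(\<lambda>x. inner_p p x x) \<in> borel_measurable (euclid_space p)"
  unfolding inner_p_def by measurable

lemma meas_innerL[measurable]: "(\<lambda>x. inner_p p x x) \<in> borel_measurable (lebesgue_p p)"
  unfolding inner_p_def by measurable

lemma meas_normL[measurable]: "norm_p p \<in> borel_measurable (lebesgue_p p)"
  unfolding norm_p_def by measurable

lemma sphere_proj_restrict: "sphere_proj p x = (\<lambda>i\<in>{..<p}. x i / norm_p p x)"
  by (auto simp: sphere_proj_def restrict_def)

lemma meas_sphere_proj[measurable]: "sphere_proj p \<in> measurable (lebesgue_p p) (euclid_space p)"
  unfolding sphere_proj_restrict euclid_space_def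
  by (intro measurable_restrict) measurable

lemma ball_sets[measurable]: "unit_ball_p p \<in> sets (lebesgue_p p)"
  unfolding unit_ball_p_def by measurable

lemma emeasure_ball: "emeasure (lebesgue_p p) (unit_ball_p p) = ennreal (unit_ball_vol (real p))"
proof -
  have "unit_ball_p p = {f. sqrt (\<Sum>i\<in>{..<p}. (f i)\<^sup>2) \<le> 1} \<inter> space (Pi\<^sub>M {..<p} (\<lambda>_. lborel))"
    by (auto simp: unit_ball_p_def norm_p_def inner_p_def lebesgue_p_def power2_eq_square)
  then show ?thesis using emeasure_cball_aux[of "{..<p}" 1] by (simp add: lebesgue_p_def)
qed

lemma prob_unif_ball: "prob_space (uniform_measure (lebesgue_p p) (unit_ball_p p))"
  using unit_ball_vol_pos[of "real p"] by (intro prob_space_uniform_measure) (auto simp: emeasure_ball simp del: unit_ball_vol_pos)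

lemma prob_unif: "prob_space (unif_sphere p)"
  unfolding unif_sphere_def
  by (rule prob_space.prob_space_distr[OF prob_unif_ball]) simp

lemma meas_upd:
  assumes "a < p" "h \<in> borel_measurable (lebesgue_p p)"
  shows "(\<lambda>x. x(a := h x)) \<in> measurable (lebesgue_p p) (lebesgue_p p)"
  unfolding lebesgue_p_def
  by (rule measurable_fun_upd[where J="{..<p}"]) (use assms in \<open>auto simp: lebesgue_p_def\<close>)

lemma nn_invariant_upd:
  fixes p a and \<tau> :: "(nat\<Rightarrow>real) \<Rightarrow> real" and s :: real
  assumes a: "a < p" and s: "\<bar>s\<bar> = 1" and tm[measurable]: "\<tau> \<in> borel_measurable (lebesgue_p p)"
    and ti: "\<And>x y. \<tau> (x(a:=y)) = \<tau> x"
    and f[measurable]: "f \<in> borel_measurable (lebesgue_p p)"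
  shows "(\<integral>\<^sup>+x. f (x(a := \<tau> x + s * x a)) \<partial>lebesgue_p p) = (\<integral>\<^sup>+x. f x \<partial>lebesgue_p p)"
proof -
  interpret product_sigma_finite "\<lambda>_. lborel :: real measure" by standard
  define I where "I = {..<p} - {a}"
  have IA: "{..<p} = insert a I" "a \<notin> I" "finite I" using a by (auto simp: I_def)
  have L: "lebesgue_p p = PiM (insert a I) (\<lambda>_. lborel)" by (simp add: lebesgue_p_def IA)
  have m1: "(\<lambda>x. x(a := \<tau> x + s * x a)) \<in> measurable (lebesgue_p p) (lebesgue_p p)"
    by (rule meas_upd[OF a]) (use a in measurable)
  have fm: "(\<lambda>x. f (x(a := \<tau> x + s * x a))) \<in> borel_measurable (PiM (insert a I) (\<lambda>_. lborel))"
    using measurable_comp[OF m1 f] by (simp add: L comp_def)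
  have fm2: "f \<in> borel_measurable (PiM (insert a I) (\<lambda>_. lborel))" using f by (simp add: L)
  have "(\<integral>\<^sup>+x. f (x(a := \<tau> x + s * x a)) \<partial>lebesgue_p p)
      = (\<integral>\<^sup>+ x. (\<integral>\<^sup>+ y. f ((x(a := (y::real)))(a := \<tau> (x(a:=y)) + s * (x(a:=y)) a)) \<partial>lborel) \<partial>(PiM I (\<lambda>_. lborel)))"
    unfolding L by (rule product_nn_integral_insert[OF IA(3) IA(2) fm])
  also have "\<dots> = (\<integral>\<^sup>+ x. (\<integral>\<^sup>+ y. f (x(a := (y::real))) \<partial>lborel) \<partial>(PiM I (\<lambda>_. lborel)))"
  proof (rule nn_integral_cong)
    fix x :: "nat \<Rightarrow> real" assume x: "x \<in> space (PiM I (\<lambda>_. lborel))"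
    have gm: "(\<lambda>y::real. f (x(a := y))) \<in> borel_measurable borel"
      using measurable_comp[OF measurable_component_update[OF x IA(2)] fm2] by (simp add: comp_def)
    have s0: "s \<noteq> 0" using s by auto
    show "(\<integral>\<^sup>+ y. f ((x(a := (y::real)))(a := \<tau> (x(a:=y)) + s * (x(a:=y)) a)) \<partial>lborel) = (\<integral>\<^sup>+ y. f (x(a := (y::real))) \<partial>lborel)"
      using nn_integral_real_affine[OF gm s0, of "\<tau> x"] by (simp add: ti s)
  qed
  also have "\<dots> = (\<integral>\<^sup>+x. f x \<partial>lebesgue_p p)"
    unfolding L by (rule product_nn_integral_insert[OF IA(3) IA(2) fm2, symmetric])
  finally show ?thesis .
qed

lemma distr_eq_by_nn:
  assumes m: "\<Phi> \<in> measurable M M"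
    and h: "\<And>f. f \<in> borel_measurable M \<Longrightarrow> (\<integral>\<^sup>+x. f (\<Phi> x) \<partial>M) = (\<integral>\<^sup>+x. f x \<partial>M)"
  shows "distr M M \<Phi> = M"
proof (rule measure_eqI)
  fix A assume A: "A \<in> sets (distr M M \<Phi>)"
  then have A': "A \<in> sets M" by simp
  have "emeasure (distr M M \<Phi>) A = (\<integral>\<^sup>+x. indicator A x \<partial>distr M M \<Phi>)"
    using A by simp
  also have "\<dots> = (\<integral>\<^sup>+x. indicator A (\<Phi> x) \<partial>M)"
    using A' m by (intro nn_integral_distr) auto
  also have "\<dots> = (\<integral>\<^sup>+x. indicator A x \<partial>M)"
    using A' by (intro h) auto
  also have "\<dots> = emeasure M A" using A' by simp
  finally show "emeasure (distr M M \<Phi>) A = emeasure M A" .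
qed simp

definition shear :: "nat \<Rightarrow> nat \<Rightarrow> real \<Rightarrow> (nat \<Rightarrow> real) \<Rightarrow> (nat \<Rightarrow> real)" where
  "shear a b \<alpha> x = x(a := \<alpha> * x b + 1 * x a)"

definition flip :: "nat \<Rightarrow> (nat \<Rightarrow> real) \<Rightarrow> (nat \<Rightarrow> real)" where
  "flip a x = x(a := 0 + (-1) * x a)"

lemma meas_shear[measurable]: "a < p \<Longrightarrow> b < p \<Longrightarrow> shear a b \<alpha> \<in> measurable (lebesgue_p p) (lebesgue_p p)"
  unfolding shear_def by (rule meas_upd) measurable

lemma meas_flip[measurable]: "a < p \<Longrightarrow> flip a \<in> measurable (lebesgue_p p) (lebesgue_p p)"
  unfolding flip_def by (rule meas_upd) measurable

lemma distr_shear: "a < p \<Longrightarrow> b < p \<Longrightarrow> a \<noteq> b \<Longrightarrow> distr (lebesgue_p p) (lebesgue_p p) (shear a b \<alpha>) = lebesgue_p p"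
  apply (rule distr_eq_by_nn)
   apply measurable
  unfolding shear_def
  apply (rule nn_invariant_upd)
      apply auto
  done

lemma distr_flip: "a < p \<Longrightarrow> distr (lebesgue_p p) (lebesgue_p p) (flip a) = lebesgue_p p"
  apply (rule distr_eq_by_nn)
   apply measurable
  unfolding flip_def
  apply (rule nn_invariant_upd)
      apply auto
  done

lemma distr_comp_id:
  assumes "f \<in> measurable M M" "g \<in> measurable M M" "distr M M f = M" "distr M M g = M"
  shows "distr M M (g \<circ> f) = M"
  using distr_distr[OF assms(2,1)] assms(3,4) by simp

definition rot :: "nat \<Rightarrow> nat \<Rightarrow> real \<Rightarrow> real \<Rightarrow> (nat \<Rightarrow> real) \<Rightarrow> (nat \<Rightarrow> real)" where
  "rot a b c d x = x(a := c * x a - d * x b, b := d * x a + c * x b)"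

lemma rot_shear_aux:
  fixes \<alpha> c d xa xb :: real
  assumes ad: "\<alpha> * d = c - 1" and ac: "\<alpha> * (1 + c) = - d"
  shows "c * xa - d * xb = \<alpha> * (d * (\<alpha> * xb + xa) + xb) + (\<alpha> * xb + xa)"
    and "d * xa + c * xb = d * (\<alpha> * xb + xa) + xb"
proof -
  have "\<alpha> * (d * (\<alpha> * xb + xa) + xb) + (\<alpha> * xb + xa) = (\<alpha> * d) * \<alpha> * xb + (\<alpha> * d) * xa + 2 * \<alpha> * xb + xa"
    by (simp add: algebra_simps)
  also have "\<dots> = c * xa + (\<alpha> * (1 + c)) * xb" unfolding ad by (simp add: algebra_simps)
  finally show "c * xa - d * xb = \<alpha> * (d * (\<alpha> * xb + xa) + xb) + (\<alpha> * xb + xa)" unfolding ac by simp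
  have "d * (\<alpha> * xb + xa) + xb = (\<alpha> * d) * xb + d * xa + xb" by (simp add: algebra_simps)
  also have "\<dots> = d * xa + c * xb" unfolding ad by (simp add: algebra_simps)
  finally show "d * xa + c * xb = d * (\<alpha> * xb + xa) + xb" by simp
qed

lemma rot_shear:
  assumes cd: "c\<^sup>2 + d\<^sup>2 = 1" and c: "c \<noteq> -1" and ab: "a \<noteq> b"
  shows "rot a b c d = shear a b (- d / (1 + c)) \<circ> shear b a d \<circ> shear a b (- d / (1 + c))"
proof
  fix x
  define \<alpha> where "\<alpha> = - d / (1 + c)"
  have c1: "1 + c \<noteq> 0" using c by auto
  have dd: "d * d = (1 - c) * (1 + c)" using cd by (simp add: power2_eq_square algebra_simps)
  have ac: "\<alpha> * (1 + c) = - d" using c1 by (simp add: \<alpha>_def)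
  have ad: "\<alpha> * d = c - 1"
  proof -
    have "\<alpha> * d * (1 + c) = (\<alpha> * (1 + c)) * d" by (simp add: algebra_simps)
    also have "\<dots> = - (d * d)" using ac by simp
    also have "\<dots> = (c - 1) * (1 + c)" unfolding dd by (simp add: algebra_simps)
    finally show ?thesis using c1 by simp
  qed
  note e = rot_shear_aux[OF ad ac, of "x a" "x b"]
  show "rot a b c d x = (shear a b (- d / (1 + c)) \<circ> shear b a d \<circ> shear a b (- d / (1 + c))) x"
    unfolding \<alpha>_def[symmetric] using ab e by (auto simp: rot_def shear_def fun_eq_iff)
qed

lemma meas_rot[measurable]:
  assumes "a < p" "b < p" shows "rot a b c d \<in> measurable (lebesgue_p p) (lebesgue_p p)"
proof -
  have 1: "(\<lambda>x. x(a := c * x a - d * x b)) \<in> measurable (lebesgue_p p) (lebesgue_p p)"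
    using assms by (intro meas_upd) auto
  show ?thesis unfolding rot_def lebesgue_p_def
    by (rule measurable_fun_upd[where J="{..<p}", OF _ 1[unfolded lebesgue_p_def]]) (use assms in \<open>auto simp flip: lebesgue_p_def\<close>)
qed

lemma distr_rot:
  assumes "c\<^sup>2 + d\<^sup>2 = 1" "c \<noteq> -1" "a \<noteq> b" "a < p" "b < p"
  shows "distr (lebesgue_p p) (lebesgue_p p) (rot a b c d) = lebesgue_p p"
  unfolding rot_shear[OF assms(1-3)]
  using assms by (intro distr_comp_id distr_shear measurable_comp[OF meas_shear meas_shear] meas_shear) auto


lemma sphere_inv:
  assumes m: "\<Phi> \<in> measurable (lebesgue_p p) (lebesgue_p p)"
    and d: "distr (lebesgue_p p) (lebesgue_p p) \<Phi> = lebesgue_p p"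
    and n: "\<And>x. x \<in> space (lebesgue_p p) \<Longrightarrow> norm_p p (\<Phi> x) = norm_p p x"
    and sp: "\<And>x. x \<in> space (lebesgue_p p) \<Longrightarrow> sphere_proj p (\<Phi> x) = \<Phi> (sphere_proj p x)"
  shows "distr (unif_sphere p) (euclid_space p) \<Phi> = unif_sphere p"
proof -
  let ?L = "lebesgue_p p" and ?B = "unit_ball_p p" and ?E = "euclid_space p"
  let ?U = "uniform_measure ?L ?B"
  have mE: "\<Phi> \<in> measurable ?E ?E"
    using m measurable_cong_sets[OF sets_lebesgue_p sets_lebesgue_p] by blast
  have mUL: "\<Phi> \<in> measurable ?U ?L" using m measurable_cong_sets[OF sets_uniform_measure refl, of ?L ?B ?L] by blast
  have spU: "sphere_proj p \<in> measurable ?U ?E"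
    using meas_sphere_proj measurable_cong_sets[OF sets_uniform_measure refl, of ?L ?B ?E] by blast
  have spL: "sphere_proj p \<in> measurable ?L ?E" by simp
  define g where "g x = indicator ?B x / emeasure ?L ?B" for x
  have gm: "g \<in> borel_measurable ?L" unfolding g_def by measurable
  have gi: "\<And>x. x \<in> space ?L \<Longrightarrow> g (\<Phi> x) = g x"
  proof -
    fix x assume x: "x \<in> space ?L"
    have "\<Phi> x \<in> space ?L" using m x by (auto simp: measurable_def)
    then have "(\<Phi> x \<in> ?B) = (x \<in> ?B)" using n[OF x] x by (auto simp: unit_ball_p_def)
    then show "g (\<Phi> x) = g x" by (simp add: g_def indicator_def)
  qed
  have U: "?U = density ?L g" unfolding uniform_measure_def g_def by (rule refl)
  have gm2: "(\<lambda>x. g (\<Phi> x)) \<in> borel_measurable ?L" using measurable_comp[OF m gm] by (simp add: comp_def)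
  have dc: "density ?L (\<lambda>x. g (\<Phi> x)) = density ?L g"
    by (rule density_cong[OF gm2 gm]) (rule AE_I2, rule gi)
  have dU: "distr ?U ?L \<Phi> = ?U"
  proof -
    have "distr (density ?L (\<lambda>x. g (\<Phi> x))) ?L \<Phi> = density (distr ?L ?L \<Phi>) g"
      using density_distr[OF gm m] by simp
    then show ?thesis using d U dc by simp
  qed
  have "distr (unif_sphere p) ?E \<Phi> = distr ?U ?E (\<Phi> \<circ> sphere_proj p)"
    unfolding unif_sphere_def by (rule distr_distr[OF mE spU])
  also have "\<dots> = distr ?U ?E (sphere_proj p \<circ> \<Phi>)"
    by (rule distr_cong) (simp_all add: sp)
  also have "\<dots> = distr (distr ?U ?L \<Phi>) ?E (sphere_proj p)"
    by (rule distr_distr[OF spL mUL, symmetric])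
  also have "\<dots> = unif_sphere p" unfolding dU unif_sphere_def ..
  finally show ?thesis .
qed

lemma inner_rot: "a \<noteq> b \<Longrightarrow> a < p \<Longrightarrow> b < p \<Longrightarrow> c\<^sup>2 + d\<^sup>2 = 1 \<Longrightarrow>
  inner_p p (rot a b c d x) (rot a b c d x) = inner_p p x x"
proof -
  assume ab: "a \<noteq> b" "a < p" "b < p" and cd: "c\<^sup>2 + d\<^sup>2 = 1"
  have split: "\<And>f::nat\<Rightarrow>real. (\<Sum>k<p. f k) = f a + f b + (\<Sum>k\<in>{..<p} - {a,b}. f k)"
  proof -
    fix f :: "nat \<Rightarrow> real"
    have 1: "(\<Sum>k<p. f k) = f a + (\<Sum>k\<in>{..<p} - {a}. f k)" using ab by (simp add: sum.remove)
    have 2: "(\<Sum>k\<in>{..<p} - {a}. f k) = f b + (\<Sum>k\<in>{..<p} - {a} - {b}. f k)" using ab by (intro sum.remove) auto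
    have 3: "{..<p} - {a} - {b} = {..<p} - {a,b}" by auto
    show "(\<Sum>k<p. f k) = f a + f b + (\<Sum>k\<in>{..<p} - {a,b}. f k)" using 1 2 3 by simp
  qed
  have r: "(\<Sum>k\<in>{..<p} - {a,b}. rot a b c d x k * rot a b c d x k) = (\<Sum>k\<in>{..<p} - {a,b}. x k * x k)"
    by (intro sum.cong) (auto simp: rot_def)
  have e: "(c * x a - d * x b) * (c * x a - d * x b) + (d * x a + c * x b) * (d * x a + c * x b)
      = (c\<^sup>2 + d\<^sup>2) * (x a * x a + x b * x b)"
    by (simp add: power2_eq_square algebra_simps)
  show ?thesis unfolding inner_p_def split[of "\<lambda>k. rot a b c d x k * rot a b c d x k"] split[of "\<lambda>k. x k * x k"] r
    using ab e cd by (simp add: rot_def)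
qed

lemma inner_flip: "a < p \<Longrightarrow> inner_p p (flip a x) (flip a x) = inner_p p x x"
  unfolding inner_p_def by (intro sum.cong) (auto simp: flip_def)

lemma sp_rot: "a \<noteq> b \<Longrightarrow> a < p \<Longrightarrow> b < p \<Longrightarrow> c\<^sup>2 + d\<^sup>2 = 1 \<Longrightarrow>
  sphere_proj p (rot a b c d x) = rot a b c d (sphere_proj p x)"
proof -
  assume h: "a \<noteq> b" "a < p" "b < p" "c\<^sup>2 + d\<^sup>2 = 1"
  have n: "norm_p p (rot a b c d x) = norm_p p x" using h by (simp add: norm_p_def inner_rot)
  show ?thesis unfolding sphere_proj_def n using h
    by (auto simp: fun_eq_iff rot_def diff_divide_distrib add_divide_distrib)
qed

lemma sp_flip: "a < p \<Longrightarrow> sphere_proj p (flip a x) = flip a (sphere_proj p x)"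
proof -
  assume h: "a < p"
  have n: "norm_p p (flip a x) = norm_p p x" using h by (simp add: norm_p_def inner_flip)
  show ?thesis unfolding sphere_proj_def n using h by (auto simp: fun_eq_iff flip_def)
qed

lemma unif_rot: "a \<noteq> b \<Longrightarrow> a < p \<Longrightarrow> b < p \<Longrightarrow> c\<^sup>2 + d\<^sup>2 = 1 \<Longrightarrow> c \<noteq> -1 \<Longrightarrow>
  distr (unif_sphere p) (euclid_space p) (rot a b c d) = unif_sphere p"
  by (intro sphere_inv meas_rot distr_rot) (auto simp: norm_p_def inner_rot sp_rot)

lemma unif_flip: "a < p \<Longrightarrow> distr (unif_sphere p) (euclid_space p) (flip a) = unif_sphere p"
  by (intro sphere_inv meas_flip distr_flip) (auto simp: norm_p_def inner_flip sp_flip)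

lemma sets_unif[measurable_cong]: "sets (unif_sphere p) = sets (euclid_space p)"
  by (simp add: unif_sphere_def)

lemma integral_unif_inv:
  fixes f :: "(nat \<Rightarrow> real) \<Rightarrow> real"
  assumes d: "distr (unif_sphere p) (euclid_space p) \<Phi> = unif_sphere p"
    and m: "\<Phi> \<in> measurable (lebesgue_p p) (lebesgue_p p)"
    and f: "f \<in> borel_measurable (euclid_space p)"
  shows "(\<integral>u. f (\<Phi> u) \<partial>unif_sphere p) = (\<integral>u. f u \<partial>unif_sphere p)"
proof -
  have m': "\<Phi> \<in> measurable (unif_sphere p) (euclid_space p)"
  proof -
    have "sets (unif_sphere p) = sets (lebesgue_p p)" by (simp add: sets_lebesgue_p sets_unif)
    from measurable_cong_sets[OF this sets_lebesgue_p[symmetric]] m show ?thesis by blast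
  qed
  have "(\<integral>u. f u \<partial>unif_sphere p) = (\<integral>u. f u \<partial>distr (unif_sphere p) (euclid_space p) \<Phi>)"
    using d by simp
  also have "\<dots> = (\<integral>u. f (\<Phi> u) \<partial>unif_sphere p)" by (rule integral_distr[OF m' f])
  finally show ?thesis by simp
qed


lemma sum_split2:
  fixes f :: "nat \<Rightarrow> real"
  assumes ab: "a \<noteq> b" "a < p" "b < p"
  shows "(\<Sum>k<p. f k) = f a + f b + (\<Sum>k\<in>{..<p} - {a,b}. f k)"
proof -
  have 1: "(\<Sum>k<p. f k) = f a + (\<Sum>k\<in>{..<p} - {a}. f k)" using ab by (simp add: sum.remove)
  have 2: "(\<Sum>k\<in>{..<p} - {a}. f k) = f b + (\<Sum>k\<in>{..<p} - {a} - {b}. f k)" using ab by (intro sum.remove) auto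
  have 3: "{..<p} - {a} - {b} = {..<p} - {a,b}" by auto
  show ?thesis using 1 2 3 by simp
qed

lemma inner_rot_T:
  assumes ab: "a \<noteq> b" "a < p" "b < p"
  shows "inner_p p s (rot a b c d u) = inner_p p (rot a b c (-d) s) u"
proof -
  have r: "(\<Sum>k\<in>{..<p} - {a,b}. s k * rot a b c d u k) = (\<Sum>k\<in>{..<p} - {a,b}. rot a b c (-d) s k * u k)"
    by (intro sum.cong) (auto simp: rot_def)
  show ?thesis unfolding inner_p_def sum_split2[OF ab, of "\<lambda>k. s k * rot a b c d u k"]
      sum_split2[OF ab, of "\<lambda>k. rot a b c (-d) s k * u k"] r
    using ab by (simp add: rot_def algebra_simps)
qed

lemma inner_flip_T: "a < p \<Longrightarrow> inner_p p s (flip a u) = inner_p p (flip a s) u"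
  unfolding inner_p_def by (intro sum.cong) (auto simp: flip_def)

definition FF :: "nat \<Rightarrow> (real \<Rightarrow> real) \<Rightarrow> (nat \<Rightarrow> real) \<Rightarrow> real" where
  "FF p f s = (\<integral>u. f (inner_p p s u) \<partial>unif_sphere p)"

lemma FF_cong: "(\<And>u. inner_p p s u = inner_p p s' u) \<Longrightarrow> FF p f s = FF p f s'"
  unfolding FF_def by simp

lemma FF_rot:
  assumes f[measurable]: "f \<in> borel_measurable borel"
    and ab: "a \<noteq> b" "a < p" "b < p" and cd: "c\<^sup>2 + d\<^sup>2 = 1" "c \<noteq> -1"
  shows "FF p f s = FF p f (rot a b c d s)"
proof -
  have "FF p f s = (\<integral>u. f (inner_p p s (rot a b c (-d) u)) \<partial>unif_sphere p)"
    unfolding FF_def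
    by (rule integral_unif_inv[symmetric, where f="\<lambda>u. f (inner_p p s u)"])
       (use ab cd in \<open>auto intro!: unif_rot meas_rot\<close>)
  also have "\<dots> = FF p f (rot a b c d s)"
    unfolding FF_def inner_rot_T[OF ab] by simp
  finally show ?thesis .
qed

lemma FF_flip:
  assumes f[measurable]: "f \<in> borel_measurable borel" and a: "a < p"
  shows "FF p f s = FF p f (flip a s)"
proof -
  have "FF p f s = (\<integral>u. f (inner_p p s (flip a u)) \<partial>unif_sphere p)"
    unfolding FF_def
    by (rule integral_unif_inv[symmetric, where f="\<lambda>u. f (inner_p p s u)"])
       (use a in \<open>auto intro!: unif_flip meas_flip\<close>)
  also have "\<dots> = FF p f (flip a s)"
    unfolding FF_def inner_flip_T[OF a] by simp
  finally show ?thesis .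
qed

lemma inner_single:
  assumes "0 < p" "\<And>i. 1 \<le> i \<Longrightarrow> i < p \<Longrightarrow> s i = 0"
  shows "inner_p p s u = s 0 * u 0"
proof -
  have "inner_p p s u = s 0 * u 0 + (\<Sum>k\<in>{..<p} - {0}. s k * u k)"
    unfolding inner_p_def using assms(1) by (simp add: sum.remove)
  also have "(\<Sum>k\<in>{..<p} - {0}. s k * u k) = 0" using assms(2) by (intro sum.neutral) auto
  finally show ?thesis by simp
qed

lemma givens:
  assumes f[measurable]: "f \<in> borel_measurable borel"
  shows "1 \<le> k \<Longrightarrow> k \<le> p \<Longrightarrow> (\<And>i. k \<le> i \<Longrightarrow> i < p \<Longrightarrow> s i = 0) \<Longrightarrow>
    FF p f s = FF p f (\<lambda>i. if i = 0 then sqrt (\<Sum>i<k. (s i)\<^sup>2) else 0)"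
proof (induction k arbitrary: s)
  case 0 then show ?case by simp
next
  case (Suc k)
  show ?case
  proof (cases "k = 0")
    case True
    have p: "0 < p" using Suc by simp
    have sq: "sqrt (\<Sum>i<Suc k. (s i)\<^sup>2) = \<bar>s 0\<bar>" using True by simp
    show ?thesis
    proof (cases "s 0 \<ge> 0")
      case True
      then show ?thesis unfolding sq using Suc.prems \<open>k = 0\<close>
        by (intro FF_cong) (simp add: inner_single[OF p])
    next
      case False
      have "FF p f s = FF p f (flip 0 s)" by (rule FF_flip[OF f p])
      also have "\<dots> = FF p f (\<lambda>i. if i = 0 then sqrt (\<Sum>i<Suc k. (s i)\<^sup>2) else 0)"
        unfolding sq using Suc.prems \<open>k = 0\<close> False
        by (intro FF_cong) (simp add: inner_single[OF p] flip_def)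
      finally show ?thesis .
    qed
  next
    case False
    have kp: "k < p" "k \<noteq> 0" "1 \<le> k" "k \<le> p" using Suc.prems False by auto
    show ?thesis
    proof (cases "s k = 0")
      case True
      have "FF p f s = FF p f (\<lambda>i. if i = 0 then sqrt (\<Sum>i<k. (s i)\<^sup>2) else 0)"
        using Suc.prems True by (intro Suc.IH kp) (metis le_antisym not_less_eq_eq)
      moreover have eq: "(\<Sum>i<Suc k. (s i)\<^sup>2) = (\<Sum>i<k. (s i)\<^sup>2)" using True by simp
      ultimately show ?thesis by (simp only: eq)
    next
      case sk: False
      define r where "r = sqrt ((s 0)\<^sup>2 + (s k)\<^sup>2)"
      have r2: "r\<^sup>2 = (s 0)\<^sup>2 + (s k)\<^sup>2" unfolding r_def by simp
      have rpos: "r > 0" unfolding r_def using sk by (simp add: add_nonneg_pos)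
      define c where "c = s 0 / r"
      define d where "d = - (s k / r)"
      have cd: "c\<^sup>2 + d\<^sup>2 = 1" unfolding c_def d_def using rpos r2 sk
        by (simp add: power_divide add_divide_distrib[symmetric])
      have c1: "c \<noteq> -1"
      proof
        assume "c = -1"
        then have "d\<^sup>2 = 0" using cd by simp
        then show False using sk rpos unfolding d_def by simp
      qed
      define s' where "s' = rot 0 k c d s"
      have s'0: "s' 0 = r" unfolding s'_def rot_def c_def d_def using kp rpos r2
        by (simp add: power2_eq_square field_simps)
      have s'k: "s' k = 0" unfolding s'_def rot_def c_def d_def using kp rpos
        by (simp add: field_simps)
      have s'i: "\<And>i. i \<noteq> 0 \<Longrightarrow> i \<noteq> k \<Longrightarrow> s' i = s i" unfolding s'_def rot_def by simp
      have "FF p f s = FF p f s'" unfolding s'_def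
        using kp cd c1 by (intro FF_rot f) auto
      also have "\<dots> = FF p f (\<lambda>i. if i = 0 then sqrt (\<Sum>i<k. (s' i)\<^sup>2) else 0)"
      proof (rule Suc.IH)
        fix i assume "k \<le> i" "i < p"
        then show "s' i = 0" using s'k s'i Suc.prems(3)[of i] kp by (cases "i = k") auto
      qed (use kp in auto)
      also have "(\<Sum>i<k. (s' i)\<^sup>2) = (\<Sum>i<Suc k. (s i)\<^sup>2)"
      proof -
        have "(\<Sum>i<k. (s' i)\<^sup>2) = (s' 0)\<^sup>2 + (\<Sum>i\<in>{..<k} - {0}. (s' i)\<^sup>2)"
          using kp by (subst sum.remove[of _ 0]) auto
        also have "(\<Sum>i\<in>{..<k} - {0}. (s' i)\<^sup>2) = (\<Sum>i\<in>{..<k} - {0}. (s i)\<^sup>2)"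
          using s'i by (intro sum.cong) auto
        moreover have "(\<Sum>i<Suc k. (s i)\<^sup>2) = (\<Sum>i<k. (s i)\<^sup>2) + (s k)\<^sup>2" by simp
        moreover have "(\<Sum>i<k. (s i)\<^sup>2) = (s 0)\<^sup>2 + (\<Sum>i\<in>{..<k} - {0}. (s i)\<^sup>2)"
          using kp by (subst sum.remove[of _ 0]) auto
        ultimately show ?thesis using s'0 r2 by simp
      qed
      finally show ?thesis .
    qed
  qed
qed

lemma givens_full:
  assumes f: "f \<in> borel_measurable borel" and p: "0 < p"
  shows "FF p f s = (\<integral>u. f (norm_p p s * u 0) \<partial>unif_sphere p)"
proof -
  have "FF p f s = FF p f (\<lambda>i. if i = 0 then sqrt (\<Sum>i<p. (s i)\<^sup>2) else 0)"
    using p by (intro givens[OF f]) auto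
  also have "\<dots> = (\<integral>u. f (norm_p p s * u 0) \<partial>unif_sphere p)"
    unfolding FF_def using p
    by (subst inner_single) (auto simp: norm_p_def inner_p_def power2_eq_square)
  finally show ?thesis .
qed


lemma coord_sq_le: "k < p \<Longrightarrow> (x k)\<^sup>2 \<le> inner_p p x x"
proof -
  assume k: "k < p"
  have "x k * x k \<le> (\<Sum>i<p. x i * x i)" by (rule member_le_sum) (use k in auto)
  then show ?thesis by (simp add: inner_p_def power2_eq_square)
qed

lemma inner_p_nonneg: "inner_p p x x \<ge> 0" unfolding inner_p_def by (intro sum_nonneg) simp

lemma norm_p_nonneg: "norm_p p x \<ge> 0" using inner_p_nonneg[of p x] by (simp add: norm_p_def)

lemma sp_coord_bound: "k < p \<Longrightarrow> \<bar>sphere_proj p x k\<bar> \<le> 1"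
proof -
  assume k: "k < p"
  show ?thesis
  proof (cases "norm_p p x = 0")
    case True then show ?thesis using k by (simp add: sphere_proj_def)
  next
    case False
    have "(x k)\<^sup>2 \<le> inner_p p x x" using k by (rule coord_sq_le)
    then have "\<bar>x k\<bar> \<le> norm_p p x" unfolding norm_p_def by (rule real_le_rsqrt[unfolded abs_le_square_iff[symmetric]] | simp add: real_le_rsqrt)
    then show ?thesis using False k norm_p_nonneg[of p x] by (simp add: sphere_proj_def abs_div divide_le_eq_1)
  qed
qed


lemma sp_unit: "norm_p p x \<noteq> 0 \<Longrightarrow> inner_p p (sphere_proj p x) (sphere_proj p x) = 1"
proof -
  assume n: "norm_p p x \<noteq> 0"
  have "inner_p p (sphere_proj p x) (sphere_proj p x) = (\<Sum>k<p. x k * x k) / (norm_p p x)\<^sup>2"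
    unfolding inner_p_def sphere_proj_def by (simp add: sum_divide_distrib power2_eq_square)
  also have "(norm_p p x)\<^sup>2 = (\<Sum>k<p. x k * x k)"
    unfolding norm_p_def using inner_p_nonneg[of p x] by (simp add: inner_p_def)
  finally show ?thesis using n by (simp add: norm_p_def inner_p_def)
qed

lemma ae_coord_bound: "AE u in unif_sphere p. \<forall>k\<in>{..<p}. \<bar>u k\<bar> \<le> 1"
  unfolding unif_sphere_def
proof (subst AE_distr_iff)
  show "sphere_proj p \<in> measurable (uniform_measure (lebesgue_p p) (unit_ball_p p)) (euclid_space p)"
    using meas_sphere_proj measurable_cong_sets[OF sets_uniform_measure refl] by blast
  show "{x \<in> space (euclid_space p). \<forall>k\<in>{..<p}. \<bar>x k\<bar> \<le> 1} \<in> sets (euclid_space p)"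
    by measurable
  show "AE x in uniform_measure (lebesgue_p p) (unit_ball_p p). \<forall>k\<in>{..<p}. \<bar>sphere_proj p x k\<bar> \<le> 1"
    by (intro AE_I2) (auto intro: sp_coord_bound)
qed

lemma null_coord0: "0 < p \<Longrightarrow> AE x in lebesgue_p p. x 0 \<noteq> 0"
proof -
  assume p: "0 < p"
  interpret product_sigma_finite "\<lambda>_. lborel :: real measure" by standard
  define N where "N = PiE {..<p} (\<lambda>i. if i = 0 then {0::real} else UNIV)"
  have "emeasure (lebesgue_p p) N = (\<Prod>i<p. emeasure lborel (if i = 0 then {0::real} else UNIV))"
    unfolding N_def lebesgue_p_def by (rule emeasure_PiM) auto
  also have "\<dots> = 0" using p by (intro prod_zero) auto
  finally have "N \<in> null_sets (lebesgue_p p)"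
    unfolding N_def lebesgue_p_def by (auto simp: null_sets_def intro!: sets_PiM_I_finite)
  then show ?thesis
    by (rule AE_I') (auto simp: N_def lebesgue_p_def space_PiM PiE_iff extensional_def)
qed

lemma ae_unit: "0 < p \<Longrightarrow> AE u in unif_sphere p. inner_p p u u = 1"
  unfolding unif_sphere_def
proof (subst AE_distr_iff)
  assume p: "0 < p"
  show "sphere_proj p \<in> measurable (uniform_measure (lebesgue_p p) (unit_ball_p p)) (euclid_space p)"
    using meas_sphere_proj measurable_cong_sets[OF sets_uniform_measure refl] by blast
  show "{x \<in> space (euclid_space p). inner_p p x x = 1} \<in> sets (euclid_space p)"
    by measurable
  have ae: "AE x in lebesgue_p p. norm_p p x \<noteq> 0"
    using null_coord0[OF p]
  proof (rule AE_mp, intro AE_I2 impI)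
    fix x :: "nat \<Rightarrow> real" assume "x 0 \<noteq> 0"
    then have "0 < (x 0)\<^sup>2" by simp
    also have "(x 0)\<^sup>2 \<le> inner_p p x x" using p by (rule coord_sq_le)
    finally show "norm_p p x \<noteq> 0" by (simp add: norm_p_def)
  qed
  then show "AE x in uniform_measure (lebesgue_p p) (unit_ball_p p). inner_p p (sphere_proj p x) (sphere_proj p x) = 1"
    unfolding uniform_measure_def
  proof (subst AE_density)
    show "(\<lambda>x. indicator (unit_ball_p p) x / emeasure (lebesgue_p p) (unit_ball_p p)) \<in> borel_measurable (lebesgue_p p)"
      by measurable
    show "AE x in lebesgue_p p. 0 < indicator (unit_ball_p p) x / emeasure (lebesgue_p p) (unit_ball_p p) \<longrightarrow>
      inner_p p (sphere_proj p x) (sphere_proj p x) = 1"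
      by (rule AE_mp[OF ae]) (intro AE_I2 impI, simp add: sp_unit)
  qed
qed


locale sph =
  fixes p :: nat
  assumes p_pos: "0 < p"
begin

abbreviation "\<mu> \<equiv> unif_sphere p"

lemma prob: "prob_space \<mu>" by (rule prob_unif)

sublocale P: prob_space \<mu> by (rule prob)

lemma int_unif:
  fixes f :: "(nat \<Rightarrow> real) \<Rightarrow> real"
  assumes f: "f \<in> borel_measurable (euclid_space p)"
    and b: "\<And>u. (\<forall>k\<in>{..<p}. \<bar>u k\<bar> \<le> 1) \<Longrightarrow> \<bar>f u\<bar> \<le> K"
  shows "integrable \<mu> f"
proof (rule P.integrable_const_bound[where B=K])
  show "AE x in \<mu>. norm (f x) \<le> K"
    using ae_coord_bound[of p] by (rule AE_mp) (auto intro!: AE_I2 b)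
  show "f \<in> borel_measurable \<mu>" using f by (simp add: measurable_cong_sets[OF sets_unif refl])
qed

lemma int_coord: "a < p \<Longrightarrow> b < p \<Longrightarrow> integrable \<mu> (\<lambda>u. (u a)^m * (u b)^n)"
  by (rule int_unif[where K=1]) (auto intro!: mult_le_one power_le_one simp: abs_mult power_abs)

lemma inner_abs_bound: "(\<forall>k\<in>{..<p}. \<bar>u k\<bar> \<le> 1) \<Longrightarrow> \<bar>inner_p p s u\<bar> \<le> (\<Sum>k<p. \<bar>s k\<bar>)"
  unfolding inner_p_def
  by (rule order_trans[OF sum_abs]) (auto intro!: sum_mono simp: abs_mult intro: mult_left_le)

lemma int_inner: "integrable \<mu> (\<lambda>u. (inner_p p s u)^n)"
  by (rule int_unif[where K="(\<Sum>k<p. \<bar>s k\<bar>)^n"])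
     (auto simp: power_abs intro!: power_mono inner_abs_bound)

lemma flip_zero:
  fixes g :: "(nat \<Rightarrow> real) \<Rightarrow> real"
  assumes a: "a < p" and g: "g \<in> borel_measurable (euclid_space p)"
    and odd: "\<And>u. g (flip a u) = - g u"
  shows "(\<integral>u. g u \<partial>\<mu>) = 0"
proof -
  have "(\<integral>u. g (flip a u) \<partial>\<mu>) = (\<integral>u. g u \<partial>\<mu>)"
    by (rule integral_unif_inv[OF unif_flip[OF a] meas_flip[OF a] g])
  then show ?thesis unfolding odd by simp
qed

lemma E1: "(\<integral>u. u 0 \<partial>\<mu>) = 0"
  using p_pos by (intro flip_zero[of 0]) (auto simp: flip_def)

lemma E3: "(\<integral>u. (u 0)^3 \<partial>\<mu>) = 0"
  using p_pos by (intro flip_zero[of 0]) (auto simp: flip_def)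

lemma E31: "a < p \<Longrightarrow> b < p \<Longrightarrow> a \<noteq> b \<Longrightarrow> (\<integral>u. (u a)^3 * u b \<partial>\<mu>) = 0"
  by (intro flip_zero[of b]) (auto simp: flip_def)

lemma E13: "a < p \<Longrightarrow> b < p \<Longrightarrow> a \<noteq> b \<Longrightarrow> (\<integral>u. u a * (u b)^3 \<partial>\<mu>) = 0"
  by (intro flip_zero[of a]) (auto simp: flip_def)

lemma FF_pow: "(\<integral>u. (inner_p p s u)^n \<partial>\<mu>) = (norm_p p s)^n * (\<integral>u. (u 0)^n \<partial>\<mu>)"
proof -
  have "(\<integral>u. (inner_p p s u)^n \<partial>\<mu>) = FF p (\<lambda>x. x^n) s" by (simp add: FF_def)
  also have "\<dots> = (\<integral>u. (norm_p p s * u 0)^n \<partial>\<mu>)" by (rule givens_full[OF _ p_pos]) simp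
  also have "\<dots> = (norm_p p s)^n * (\<integral>u. (u 0)^n \<partial>\<mu>)" by (simp add: power_mult_distrib)
  finally show ?thesis .
qed

definition ea :: "nat \<Rightarrow> nat \<Rightarrow> real" where "ea a = (\<lambda>i. if i = a then 1 else 0)"

lemma inner_ea: "a < p \<Longrightarrow> inner_p p (ea a) u = u a"
proof -
  assume a: "a < p"
  have "inner_p p (ea a) u = (\<Sum>k<p. if k = a then u k else 0)"
    unfolding inner_p_def ea_def by (rule sum.cong) auto
  then show ?thesis using a by simp
qed

lemma norm_ea: "a < p \<Longrightarrow> norm_p p (ea a) = 1"
  using inner_ea[of a "ea a"] by (simp add: norm_p_def ea_def)

lemma coord_pow: "a < p \<Longrightarrow> (\<integral>u. (u a)^n \<partial>\<mu>) = (\<integral>u. (u 0)^n \<partial>\<mu>)"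
  using FF_pow[of "ea a" n] by (simp add: inner_ea norm_ea)

definition m2 where "m2 = (\<integral>u. (u 0)^2 \<partial>\<mu>)"
definition m4 where "m4 = (\<integral>u. (u 0)^4 \<partial>\<mu>)"

lemma int_unit: "(\<integral>u. inner_p p u u \<partial>\<mu>) = 1"
proof -
  have "(\<integral>u. inner_p p u u \<partial>\<mu>) = (\<integral>u. 1 \<partial>\<mu>)"
    by (rule integral_cong_AE) (use ae_unit[OF p_pos] in auto)
  then show ?thesis by (simp add: P.prob_space)
qed

lemma m2_val: "m2 = 1 / p"
proof -
  have "1 = (\<integral>u. inner_p p u u \<partial>\<mu>)" using int_unit by simp
  also have "\<dots> = (\<Sum>k<p. \<integral>u. (u k)^2 \<partial>\<mu>)"
    unfolding inner_p_def power2_eq_square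
  proof (rule Bochner_Integration.integral_sum)
    fix k assume "k \<in> {..<p}"
    then show "integrable \<mu> (\<lambda>u. u k * u k)" using int_coord[of k k 1 1] by simp
  qed
  also have "\<dots> = (\<Sum>k<p. m2)" unfolding m2_def by (rule sum.cong) (auto intro: coord_pow)
  also have "\<dots> = p * m2" by simp
  finally show ?thesis using p_pos by (simp add: field_simps)
qed

lemma int_c1: "a < p \<Longrightarrow> integrable \<mu> (\<lambda>u. (u a)^m)"
  using int_coord[of a a m 0] by simp

lemma inner_add_left: "inner_p p (\<lambda>i. s i + r i) u = inner_p p s u + inner_p p r u"
  unfolding inner_p_def by (simp add: distrib_right sum.distrib)

lemma pair4:
  assumes ab: "a < p" "b < p" "a \<noteq> b"
  shows "(\<integral>u. (u a + u b)^4 \<partial>\<mu>) = 4 * m4"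
proof -
  define s where "s = (\<lambda>i. ea a i + ea b i)"
  have hs: "\<And>v. inner_p p s v = v a + v b" unfolding s_def inner_add_left using ab by (simp add: inner_ea)
  have ns: "norm_p p s = sqrt 2" unfolding norm_p_def hs using ab by (simp add: s_def ea_def)
  have "(\<integral>u. (u a + u b)^4 \<partial>\<mu>) = (\<integral>u. (inner_p p s u)^4 \<partial>\<mu>)" by (simp add: hs)
  also have "\<dots> = (sqrt 2)^4 * m4" unfolding FF_pow ns m4_def ..
  also have "(sqrt 2)^4 = ((sqrt 2)^2)^(2::nat)" by (subst power_mult[symmetric]) simp
  also have "\<dots> = (4::real)" by simp
  finally show ?thesis .
qed

lemma m22:
  assumes ab: "a < p" "b < p" "a \<noteq> b"
  shows "(\<integral>u. (u a)^2 * (u b)^2 \<partial>\<mu>) = m4 / 3"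
proof -
  have ex: "\<And>x y::real. (x + y)^4 = x^4 + 4 * (x^3 * y) + 6 * (x^2 * y^2) + 4 * (x * y^3) + y^4"
    by (simp add: power_def eval_nat_numeral algebra_simps)
  have i1: "integrable \<mu> (\<lambda>u. (u a)^4)" "integrable \<mu> (\<lambda>u. (u b)^4)" using ab by (auto intro: int_c1)
  have i2: "integrable \<mu> (\<lambda>u. (u a)^3 * u b)" "integrable \<mu> (\<lambda>u. (u a)^2 * (u b)^2)"
      "integrable \<mu> (\<lambda>u. u a * (u b)^3)"
    using ab int_coord[of a b 3 1] int_coord[of a b 2 2] int_coord[of a b 1 3] by auto
  have "4 * m4 = (\<integral>u. (u a + u b)^4 \<partial>\<mu>)" using pair4[OF ab] by simp
  also have "\<dots> = (\<integral>u. (u a)^4 \<partial>\<mu>) + 4 * (\<integral>u. (u a)^3 * u b \<partial>\<mu>) + 6 * (\<integral>u. (u a)^2 * (u b)^2 \<partial>\<mu>)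
      + 4 * (\<integral>u. u a * (u b)^3 \<partial>\<mu>) + (\<integral>u. (u b)^4 \<partial>\<mu>)"
    unfolding ex using i1 i2 by simp
  also have "\<dots> = 2 * m4 + 6 * (\<integral>u. (u a)^2 * (u b)^2 \<partial>\<mu>)"
  proof -
    have "(\<integral>u. (u a)^4 \<partial>\<mu>) = m4" "(\<integral>u. (u b)^4 \<partial>\<mu>) = m4"
      using ab coord_pow[of a 4] coord_pow[of b 4] by (simp_all add: m4_def)
    then show ?thesis using ab by (simp add: E31 E13)
  qed
  finally show ?thesis by simp
qed

lemma m4_val: "m4 = 3 / (p * (p + 2))"
proof -
  have "1 = (\<integral>u. (inner_p p u u)^2 \<partial>\<mu>)"
  proof -
    have "(\<integral>u. (inner_p p u u)^2 \<partial>\<mu>) = (\<integral>u. 1 \<partial>\<mu>)"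
      by (rule integral_cong_AE) (use ae_unit[OF p_pos] in auto)
    then show ?thesis by (simp add: P.prob_space)
  qed
  also have "\<dots> = (\<integral>u. (\<Sum>a<p. \<Sum>b<p. (u a)^2 * (u b)^2) \<partial>\<mu>)"
    unfolding inner_p_def power2_eq_square[of "sum _ _"] sum_product by (simp add: power2_eq_square)
  also have "\<dots> = (\<Sum>a<p. \<Sum>b<p. \<integral>u. (u a)^2 * (u b)^2 \<partial>\<mu>)"
  proof -
    have "(\<integral>u. (\<Sum>a<p. \<Sum>b<p. (u a)^2 * (u b)^2) \<partial>\<mu>) = (\<Sum>a<p. \<integral>u. (\<Sum>b<p. (u a)^2 * (u b)^2) \<partial>\<mu>)"
      by (rule Bochner_Integration.integral_sum) (auto intro!: Bochner_Integration.integrable_sum int_coord)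
    also have "\<dots> = (\<Sum>a<p. \<Sum>b<p. \<integral>u. (u a)^2 * (u b)^2 \<partial>\<mu>)"
      by (intro sum.cong refl Bochner_Integration.integral_sum int_coord) auto
    finally show ?thesis .
  qed
  also have "\<dots> = (\<Sum>a<p. m4 + (p - 1) * (m4 / 3))"
  proof (rule sum.cong[OF refl])
    fix a assume a: "a \<in> {..<p}"
    have "(\<Sum>b<p. \<integral>u. (u a)^2 * (u b)^2 \<partial>\<mu>) = (\<integral>u. (u a)^2 * (u a)^2 \<partial>\<mu>)
        + (\<Sum>b\<in>{..<p} - {a}. \<integral>u. (u a)^2 * (u b)^2 \<partial>\<mu>)"
      using a by (subst sum.remove[of _ a]) auto
    also have "(\<integral>u. (u a)^2 * (u a)^2 \<partial>\<mu>) = m4"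
      using a coord_pow[of a 4] by (simp add: m4_def power_add[symmetric])
    also have "(\<Sum>b\<in>{..<p} - {a}. \<integral>u. (u a)^2 * (u b)^2 \<partial>\<mu>) = (\<Sum>b\<in>{..<p} - {a}. m4 / 3)"
      using a by (intro sum.cong refl m22) auto
    also have "\<dots> = (p - 1) * (m4 / 3)" using a by simp
    finally show "(\<Sum>b<p. \<integral>u. (u a)^2 * (u b)^2 \<partial>\<mu>) = m4 + (p - 1) * (m4 / 3)" .
  qed
  also have "\<dots> = p * (p + 2) * m4 / 3" using p_pos by (simp add: of_nat_diff field_simps)
  finally have h: "m4 * (p * (p + 2)) = 3" by (simp add: field_simps)
  have x0: "p * (p + 2) \<noteq> 0" using p_pos by simp
  have x: "real (p * (p + 2)) \<noteq> 0" using x0 by (metis of_nat_eq_0_iff)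
  show ?thesis unfolding eq_divide_eq if_P[OF x] using h by simp
qed

lemma norm_sq: "(norm_p p s)^2 = inner_p p s s"
  unfolding norm_p_def using inner_p_nonneg[of p s] by simp

lemma V1: "(\<integral>u. inner_p p s u \<partial>\<mu>) = 0"
  using FF_pow[of s 1] E1 by simp

lemma V2: "(\<integral>u. (inner_p p s u)^2 \<partial>\<mu>) = inner_p p s s / p"
  using FF_pow[of s 2] m2_val by (simp add: norm_sq m2_def[symmetric])

lemma V3: "(\<integral>u. (inner_p p s u)^3 \<partial>\<mu>) = 0"
  using FF_pow[of s 3] E3 by simp

lemma V4: "(\<integral>u. (inner_p p s u)^4 \<partial>\<mu>) = (inner_p p s s)^2 * m4"
proof -
  have "(norm_p p s)^4 = (inner_p p s s)^2" unfolding norm_sq[symmetric] by (simp flip: power_mult)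
  then show ?thesis using FF_pow[of s 4] by (simp add: m4_def[symmetric])
qed

end


lemma poly3: "(\<Sum>k \<le> 3. (\<i> * complex_of_real x)^k / fact k) = complex_of_real (1 - x^2/2) + \<i> * complex_of_real (x - x^3/6)"
  by (simp add: eval_nat_numeral atMost_Suc field_simps complex_eq_iff)

context sph begin

lemma m4_le: "m4 \<le> 3 / p^2"
  unfolding m4_val using p_pos by (simp add: power2_eq_square frac_le)

lemma charS:
  "cmod ((CLINT u|\<mu>. iexp (\<tau> * inner_p p s u)) - complex_of_real (1 - \<tau>^2 * inner_p p s s / (2 * p)))
     \<le> \<tau>^4 * (inner_p p s s)^2 / (8 * p^2)"
proof -
  define X where "X u = \<tau> * inner_p p s u" for u
  have Xm[measurable]: "X \<in> borel_measurable \<mu>" unfolding X_def by (simp add: measurable_cong_sets[OF sets_unif refl])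
  have iX: "\<And>n. integrable \<mu> (\<lambda>u. (X u)^n)"
    unfolding X_def power_mult_distrib by (intro integrable_mult_right int_inner)
  define A where "A u = 1 - (X u)^2/2" for u
  define B where "B u = X u - (X u)^3/6" for u
  define Q where "Q x = complex_of_real (1 - x^2/2) + \<i> * complex_of_real (x - x^3/6)" for x
  have QAB: "\<And>u. Q (X u) = complex_of_real (A u) + \<i> * complex_of_real (B u)"
    unfolding Q_def A_def B_def by simp
  have iA: "integrable \<mu> A" unfolding A_def using iX[of 2] by auto
  have iB: "integrable \<mu> B" unfolding B_def using iX[of 3] iX[of 1] by auto
  have iQ: "integrable \<mu> (\<lambda>u. Q (X u))"
    unfolding QAB using iA iB
    by (intro Bochner_Integration.integrable_add integrable_mult_right integrable_of_real)
  have iE: "integrable \<mu> (\<lambda>u. iexp (X u))"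
    by (rule P.integrable_const_bound[where B=1]) (auto simp: norm_exp_i_times)
  have IQ: "(CLINT u|\<mu>. Q (X u)) = complex_of_real (1 - \<tau>^2 * inner_p p s s / (2 * p))"
  proof -
    have a: "(\<integral>u. A u \<partial>\<mu>) = 1 - \<tau>^2 * inner_p p s s / (2 * p)"
      using iX[of 2] V2[of s] by (simp add: A_def X_def power_mult_distrib P.prob_space)
    have b: "(\<integral>u. B u \<partial>\<mu>) = 0"
      using iX[of 3] iX[of 1] V1[of s] V3[of s] by (simp add: B_def X_def power_mult_distrib)
    have "(CLINT u|\<mu>. Q (X u)) = (CLINT u|\<mu>. complex_of_real (A u)) + (CLINT u|\<mu>. \<i> * complex_of_real (B u))"
      unfolding QAB using iA iB
      by (intro Bochner_Integration.integral_add integrable_mult_right integrable_of_real)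
    also have "\<dots> = complex_of_real (\<integral>u. A u \<partial>\<mu>) + \<i> * complex_of_real (\<integral>u. B u \<partial>\<mu>)"
      by simp
    finally show ?thesis using a b by simp
  qed
  have "cmod ((CLINT u|\<mu>. iexp (X u)) - (CLINT u|\<mu>. Q (X u))) = cmod (CLINT u|\<mu>. iexp (X u) - Q (X u))"
    using iE iQ by simp
  also have "\<dots> \<le> (\<integral>u. cmod (iexp (X u) - Q (X u)) \<partial>\<mu>)" by (rule integral_norm_bound)
  also have "\<dots> \<le> (\<integral>u. (X u)^4 / 24 \<partial>\<mu>)"
  proof (rule integral_mono)
    show "integrable \<mu> (\<lambda>u. cmod (iexp (X u) - Q (X u)))" using iE iQ by auto
    show "integrable \<mu> (\<lambda>u. (X u)^4 / 24)" using iX[of 4] by auto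
    fix u
    have "cmod (iexp (X u) - Q (X u)) \<le> \<bar>X u\<bar>^4 / fact 4"
      using iexp_approx1[of "X u" 3] unfolding poly3 Q_def by (simp add: numeral_eq_Suc)
    moreover have "\<bar>X u\<bar>^4 = (X u)^4" by (rule power_even_abs) simp
    ultimately show "cmod (iexp (X u) - Q (X u)) \<le> (X u)^4 / 24" by (simp add: fact_numeral)
  qed
  also have "\<dots> = \<tau>^4 * (inner_p p s s)^2 * m4 / 24"
    using V4[of s] by (simp add: X_def power_mult_distrib)
  also have "\<dots> \<le> \<tau>^4 * (inner_p p s s)^2 * (3 / p^2) / 24"
    by (intro divide_right_mono mult_left_mono m4_le) auto
  also have "\<dots> = \<tau>^4 * (inner_p p s s)^2 / (8 * p^2)" by simp
  finally show ?thesis using IQ by (simp add: X_def)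
qed

end


lemma inner_p_sym: "inner_p p x y = inner_p p y x"
  unfolding inner_p_def by (simp add: mult.commute)

lemma inner_p_add: "inner_p p (\<lambda>c. x c + y c) (\<lambda>c. x c + y c) = inner_p p x x + 2 * inner_p p x y + inner_p p y y"
  unfolding inner_p_def by (simp add: algebra_simps sum.distrib sum_distrib_left)

context sph begin

definition PP :: "nat \<Rightarrow> (nat \<Rightarrow> nat \<Rightarrow> real) measure" where
  "PP k = PiM {1..k} (\<lambda>_. \<mu>)"

definition SS :: "nat \<Rightarrow> (nat \<Rightarrow> nat \<Rightarrow> real) \<Rightarrow> nat \<Rightarrow> real" where
  "SS k \<omega> = (\<lambda>c. \<Sum>i\<in>{1..k}. \<omega> i c)"

definition QQ :: "nat \<Rightarrow> (nat \<Rightarrow> nat \<Rightarrow> real) \<Rightarrow> real" where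
  "QQ k \<omega> = inner_p p (SS k \<omega>) (SS k \<omega>)"

lemma prob_PP: "prob_space (PP k)"
  unfolding PP_def by (intro prob_space_PiM prob)

lemma Fub:
  fixes f :: "(nat \<Rightarrow> nat \<Rightarrow> real) \<Rightarrow> 'b::{banach, second_countable_topology}"
  assumes "integrable (PP (Suc k)) f"
  shows "integral\<^sup>L (PP (Suc k)) f = (\<integral>x. (\<integral>u. f (x(Suc k := u)) \<partial>\<mu>) \<partial>PP k)"
proof -
  interpret product_sigma_finite "\<lambda>_. \<mu>" by standard
  have e: "{1..Suc k} = insert (Suc k) {1..k}" by auto
  show ?thesis using assms unfolding PP_def e
    by (intro product_integral_insert) auto
qed

lemma meas_comp[measurable]: "i \<in> {1..m} \<Longrightarrow> c < p \<Longrightarrow> (\<lambda>\<omega>. \<omega> i c) \<in> borel_measurable (PP m)"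
proof -
  assume i: "i \<in> {1..m}" and c: "c < p"
  have 1: "(\<lambda>\<omega>. \<omega> i) \<in> measurable (PP m) \<mu>"
    unfolding PP_def using i by (rule measurable_component_singleton)
  have 2: "(\<lambda>u. u c) \<in> borel_measurable \<mu>"
    using c by (simp add: measurable_cong_sets[OF sets_unif refl])
  show ?thesis using measurable_comp[OF 1 2] by (simp add: comp_def)
qed

lemma meas_SS: "k \<le> m \<Longrightarrow> c < p \<Longrightarrow> (\<lambda>\<omega>. SS k \<omega> c) \<in> borel_measurable (PP m)"
  unfolding SS_def by (intro borel_measurable_sum meas_comp) auto

lemma meas_QQ: "k \<le> m \<Longrightarrow> QQ k \<in> borel_measurable (PP m)"
  unfolding QQ_def inner_p_def by (intro borel_measurable_sum borel_measurable_times meas_SS) auto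

lemma meas_G: "k < m \<Longrightarrow> (\<lambda>\<omega>. inner_p p (SS k \<omega>) (\<omega> (Suc k))) \<in> borel_measurable (PP m)"
  unfolding inner_p_def by (intro borel_measurable_sum borel_measurable_times meas_SS meas_comp) auto

lemma SS_upd: "k < j \<Longrightarrow> SS k (x(j := u)) = SS k x"
  unfolding SS_def by (intro ext sum.cong) auto

lemma QQ_upd: "k < j \<Longrightarrow> QQ k (x(j := u)) = QQ k x"
  unfolding QQ_def by (simp add: SS_upd)

lemma SS_Suc: "SS (Suc k) (x(Suc k := u)) = (\<lambda>c. SS k x c + u c)"
  unfolding SS_def by (auto simp: SS_def fun_eq_iff intro!: sum.cong)

lemma QQ_Suc: "QQ (Suc k) (x(Suc k := u)) = QQ k x + 2 * inner_p p (SS k x) u + inner_p p u u"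
  unfolding QQ_def SS_Suc inner_p_add ..

lemma ae_PP: "AE \<omega> in PP m. \<forall>i\<in>{1..m}. \<forall>c\<in>{..<p}. \<bar>\<omega> i c\<bar> \<le> 1"
  unfolding PP_def
  by (subst AE_finite_all) (auto intro!: AE_PiM_component prob ae_coord_bound)

lemma ae_PP_unit: "AE \<omega> in PP m. \<forall>i\<in>{1..m}. inner_p p (\<omega> i) (\<omega> i) = 1"
  unfolding PP_def
  by (subst AE_finite_all) (auto intro!: AE_PiM_component prob ae_unit p_pos)

lemma intP:
  fixes f :: "(nat \<Rightarrow> nat \<Rightarrow> real) \<Rightarrow> real"
  assumes f: "f \<in> borel_measurable (PP m)"
    and b: "\<And>\<omega>. (\<forall>i\<in>{1..m}. \<forall>c\<in>{..<p}. \<bar>\<omega> i c\<bar> \<le> 1) \<Longrightarrow> \<bar>f \<omega>\<bar> \<le> K"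
  shows "integrable (PP m) f"
proof -
  interpret Q: prob_space "PP m" by (rule prob_PP)
  show ?thesis
  proof (rule Q.integrable_const_bound[where B=K])
    show "AE x in PP m. norm (f x) \<le> K"
      by (rule AE_mp[OF ae_PP[of m]]) (intro AE_I2 impI, simp add: b)
  qed (rule f)
qed

lemma SS_bound: "k \<le> m \<Longrightarrow> (\<forall>i\<in>{1..m}. \<forall>c\<in>{..<p}. \<bar>\<omega> i c\<bar> \<le> 1) \<Longrightarrow> c < p \<Longrightarrow> \<bar>SS k \<omega> c\<bar> \<le> k"
proof -
  assume k: "k \<le> m" and b: "\<forall>i\<in>{1..m}. \<forall>c\<in>{..<p}. \<bar>\<omega> i c\<bar> \<le> 1" and c: "c < p"
  have "\<bar>SS k \<omega> c\<bar> \<le> (\<Sum>i\<in>{1..k}. \<bar>\<omega> i c\<bar>)" unfolding SS_def by (rule sum_abs)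
  also have "\<dots> \<le> (\<Sum>i\<in>{1..k}. 1)" using k b c by (intro sum_mono) auto
  finally show ?thesis by simp
qed

lemma QQ_bound: "k \<le> m \<Longrightarrow> (\<forall>i\<in>{1..m}. \<forall>c\<in>{..<p}. \<bar>\<omega> i c\<bar> \<le> 1) \<Longrightarrow> \<bar>QQ k \<omega>\<bar> \<le> p * k^2"
proof -
  assume k: "k \<le> m" and b: "\<forall>i\<in>{1..m}. \<forall>c\<in>{..<p}. \<bar>\<omega> i c\<bar> \<le> 1"
  have "\<bar>QQ k \<omega>\<bar> \<le> (\<Sum>c<p. \<bar>SS k \<omega> c * SS k \<omega> c\<bar>)" unfolding QQ_def inner_p_def by (rule sum_abs)
  also have "\<dots> \<le> (\<Sum>c<p. real k * k)" 
  proof (intro sum_mono)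
    fix c assume "c \<in> {..<p}"
    then have h: "\<bar>SS k \<omega> c\<bar> \<le> k" using SS_bound[OF k b] by auto
    show "\<bar>SS k \<omega> c * SS k \<omega> c\<bar> \<le> real k * k"
      unfolding abs_mult by (rule mult_mono[OF h h]) auto
  qed
  finally show ?thesis by (simp add: power2_eq_square)
qed

lemma G_bound: "k < m \<Longrightarrow> (\<forall>i\<in>{1..m}. \<forall>c\<in>{..<p}. \<bar>\<omega> i c\<bar> \<le> 1) \<Longrightarrow>
    \<bar>inner_p p (SS k \<omega>) (\<omega> (Suc k))\<bar> \<le> p * k"
proof -
  assume k: "k < m" and b: "\<forall>i\<in>{1..m}. \<forall>c\<in>{..<p}. \<bar>\<omega> i c\<bar> \<le> 1"
  have "\<bar>inner_p p (SS k \<omega>) (\<omega> (Suc k))\<bar> \<le> (\<Sum>c<p. \<bar>SS k \<omega> c * \<omega> (Suc k) c\<bar>)"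
    unfolding inner_p_def by (rule sum_abs)
  also have "\<dots> \<le> (\<Sum>c<p. real k * 1)"
  proof (intro sum_mono)
    fix c assume c: "c \<in> {..<p}"
    then have h: "\<bar>SS k \<omega> c\<bar> \<le> k" using SS_bound[of k m \<omega>] k b by auto
    have h2: "\<bar>\<omega> (Suc k) c\<bar> \<le> 1" using k b c by auto
    show "\<bar>SS k \<omega> c * \<omega> (Suc k) c\<bar> \<le> real k * 1"
      unfolding abs_mult by (rule mult_mono[OF h h2]) auto
  qed
  finally show ?thesis by simp
qed

end


context sph begin

lemma intc: "integrable (PP k) (\<lambda>_. c :: real)"
proof -
  interpret prob_space "PP k" by (rule prob_PP)
  show ?thesis by simp
qed

lemma intQ: "k \<le> m \<Longrightarrow> integrable (PP m) (QQ k)"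
proof -
  assume k: "k \<le> m"
  show ?thesis by (rule intP[OF meas_QQ[OF k], where K="p * k^2"]) (rule QQ_bound[OF k])
qed

lemma intQQ: "a \<le> m \<Longrightarrow> b \<le> m \<Longrightarrow> integrable (PP m) (\<lambda>\<omega>. QQ a \<omega> * QQ b \<omega>)"
proof (rule intP[where K="real (p * a^2) * real (p * b^2)"])
  assume "a \<le> m" "b \<le> m"
  then show "(\<lambda>\<omega>. QQ a \<omega> * QQ b \<omega>) \<in> borel_measurable (PP m)" by (intro borel_measurable_times meas_QQ)
  fix \<omega> :: "nat \<Rightarrow> nat \<Rightarrow> real" assume b: "\<forall>i\<in>{1..m}. \<forall>c\<in>{..<p}. \<bar>\<omega> i c\<bar> \<le> 1"
  show "\<bar>QQ a \<omega> * QQ b \<omega>\<bar> \<le> real (p * a^2) * real (p * b^2)"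
    unfolding abs_mult using QQ_bound[OF \<open>a \<le> m\<close> b] QQ_bound[OF \<open>b \<le> m\<close> b]
    by (intro mult_mono) auto
qed

lemma lift1:
  fixes f :: "(nat \<Rightarrow> nat \<Rightarrow> real) \<Rightarrow> real"
  assumes i: "integrable (PP (Suc m)) f" and u: "\<And>x u. f (x(Suc m := u)) = f x"
  shows "integral\<^sup>L (PP (Suc m)) f = integral\<^sup>L (PP m) f"
  unfolding Fub[OF i] u by (simp add: P.prob_space)

lemma lift:
  fixes f :: "(nat \<Rightarrow> nat \<Rightarrow> real) \<Rightarrow> real"
  assumes u: "\<And>j x u. k < j \<Longrightarrow> f (x(j := u)) = f x"
    and i: "\<And>m'. k \<le> m' \<Longrightarrow> integrable (PP m') f"
  shows "k \<le> m \<Longrightarrow> integral\<^sup>L (PP m) f = integral\<^sup>L (PP k) f"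
proof (induction m)
  case 0 then show ?case by simp
next
  case (Suc m)
  show ?case
  proof (cases "k = Suc m")
    case False
    then have "k \<le> m" using Suc by simp
    have "integral\<^sup>L (PP (Suc m)) f = integral\<^sup>L (PP m) f"
      by (rule lift1[OF i]) (use \<open>k \<le> m\<close> u in auto)
    then show ?thesis using Suc.IH[OF \<open>k \<le> m\<close>] by simp
  qed simp
qed

lemma int_uu: "integrable \<mu> (\<lambda>u. inner_p p u u)"
proof (rule int_unif[where K=p])
  show "(\<lambda>u. inner_p p u u) \<in> borel_measurable (euclid_space p)" by simp
  fix u :: "nat \<Rightarrow> real" assume b: "\<forall>k\<in>{..<p}. \<bar>u k\<bar> \<le> 1"
  have "\<bar>inner_p p u u\<bar> \<le> (\<Sum>k<p. \<bar>u k * u k\<bar>)" unfolding inner_p_def by (rule sum_abs)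
  also have "\<dots> \<le> (\<Sum>k<p. 1)"
  proof (rule sum_mono)
    fix k assume "k \<in> {..<p}"
    then have h: "\<bar>u k\<bar> \<le> 1" using b by auto
    show "\<bar>u k * u k\<bar> \<le> 1" unfolding abs_mult by (rule mult_le_one[OF h abs_ge_zero h])
  qed
  finally show "\<bar>inner_p p u u\<bar> \<le> p" by simp
qed

lemma I1: "(\<integral>u. QQ (Suc k) (x(Suc k := u)) \<partial>\<mu>) = QQ k x + 1"
  unfolding QQ_Suc using int_inner[of "SS k x" 1] int_uu
  by (simp add: V1 int_unit P.prob_space)

lemma I2: "(\<integral>u. (QQ (Suc k) (x(Suc k := u)))^2 \<partial>\<mu>) = (QQ k x + 1)^2 + 4 * QQ k x / p"
proof -
  let ?s = "SS k x"
  have "(\<integral>u. (QQ (Suc k) (x(Suc k := u)))^2 \<partial>\<mu>) = (\<integral>u. (QQ k x + 1)^2 + 4 * (QQ k x + 1) * inner_p p ?s u + 4 * (inner_p p ?s u)^2 \<partial>\<mu>)"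
  proof (rule integral_cong_AE)
    show "AE u in \<mu>. (QQ (Suc k) (x(Suc k := u)))^2 = (QQ k x + 1)^2 + 4 * (QQ k x + 1) * inner_p p ?s u + 4 * (inner_p p ?s u)^2"
      using ae_unit[OF p_pos] by (rule AE_mp) (intro AE_I2 impI, simp add: QQ_Suc power2_eq_square algebra_simps)
  qed (auto simp: measurable_cong_sets[OF sets_unif refl] QQ_Suc)
  also have "\<dots> = (QQ k x + 1)^2 + 4 * QQ k x / p"
    using int_inner[of ?s 1] int_inner[of ?s 2]
    by (simp add: V1 V2 P.prob_space QQ_def)
  finally show ?thesis .
qed

lemma I3: "a \<le> k \<Longrightarrow> (\<integral>u. QQ a (x(Suc k := u)) * QQ (Suc k) (x(Suc k := u)) \<partial>\<mu>) = QQ a x * (QQ k x + 1)"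
proof -
  assume a: "a \<le> k"
  have "(\<integral>u. QQ a (x(Suc k := u)) * QQ (Suc k) (x(Suc k := u)) \<partial>\<mu>) = (\<integral>u. QQ a x * QQ (Suc k) (x(Suc k := u)) \<partial>\<mu>)"
    using a by (simp add: QQ_upd)
  also have "\<dots> = QQ a x * (QQ k x + 1)" by (simp add: I1)
  finally show ?thesis .
qed

lemma QQ0: "QQ 0 x = 0" by (simp add: QQ_def SS_def inner_p_def)

lemma EQ: "(\<integral>\<omega>. QQ k \<omega> \<partial>PP k) = k"
proof (induction k)
  case 0 then show ?case by (simp add: QQ0)
next
  case (Suc k)
  have "(\<integral>\<omega>. QQ (Suc k) \<omega> \<partial>PP (Suc k)) = (\<integral>x. QQ k x + 1 \<partial>PP k)"
    unfolding Fub[OF intQ[OF order_refl]] I1 ..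
  also have "\<dots> = (\<integral>x. QQ k x \<partial>PP k) + (\<integral>x. 1 \<partial>PP k)"
    using intQ[of k k] intc by (intro Bochner_Integration.integral_add) auto
  also have "\<dots> = k + 1" using Suc by (simp add: prob_space.prob_space[OF prob_PP])
  finally show ?case by simp
qed

lemma EQ2: "(\<integral>\<omega>. (QQ k \<omega>)^2 \<partial>PP k) = k^2 + 2 * k * (k - 1) / p"
proof (induction k)
  case 0 then show ?case by (simp add: QQ0)
next
  case (Suc k)
  have i2: "integrable (PP (Suc k)) (\<lambda>\<omega>. (QQ (Suc k) \<omega>)^2)"
    using intQQ[of "Suc k" "Suc k" "Suc k"] by (simp add: power2_eq_square)
  have i2': "integrable (PP k) (\<lambda>\<omega>. (QQ k \<omega>)^2)"
    using intQQ[of k k k] by (simp add: power2_eq_square)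
  have "(\<integral>\<omega>. (QQ (Suc k) \<omega>)^2 \<partial>PP (Suc k)) = (\<integral>x. (QQ k x + 1)^2 + 4 * QQ k x / p \<partial>PP k)"
    unfolding Fub[OF i2] I2 ..
  also have "\<dots> = (\<integral>x. (QQ k x)^2 + (2 + 4 / p) * QQ k x + 1 \<partial>PP k)"
    by (rule Bochner_Integration.integral_cong) (auto simp: power2_eq_square algebra_simps add_divide_distrib)
  also have "\<dots> = (\<integral>x. (QQ k x)^2 \<partial>PP k) + (\<integral>x. (2 + 4 / p) * QQ k x \<partial>PP k) + (\<integral>x. 1 \<partial>PP k)"
  proof -
    have ic: "integrable (PP k) (\<lambda>x. (2 + 4 / p) * QQ k x)" using intQ[of k k] by auto
    have ia: "integrable (PP k) (\<lambda>x. (QQ k x)^2 + (2 + 4 / p) * QQ k x)" using i2' ic by auto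
    show ?thesis
      unfolding Bochner_Integration.integral_add[OF ia intc] Bochner_Integration.integral_add[OF i2' ic] ..
  qed
  also have "\<dots> = k^2 + 2 * k * (k - 1) / p + (2 + 4 / p) * k + 1"
    using Suc EQ[of k] by (cases "k = 0") (simp_all add: prob_space.prob_space[OF prob_PP] of_nat_diff)
  also have "\<dots> = real (Suc k)^2 + 2 * real (Suc k) * (real (Suc k) - 1) / p"
    using p_pos by (cases k) (simp_all add: field_simps power2_eq_square)
  finally show ?case .
qed

lemma EQ_lift: "a \<le> m \<Longrightarrow> (\<integral>\<omega>. QQ a \<omega> \<partial>PP m) = a"
  using lift[of a "QQ a" m] by (simp add: QQ_upd intQ EQ)

lemma div_le_self: "0 \<le> (x::real) \<Longrightarrow> 1 \<le> y \<Longrightarrow> x / y \<le> x"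
  using divide_left_mono[of 1 y x] by simp

lemma EQQ: "a \<le> b \<Longrightarrow> (\<integral>\<omega>. QQ a \<omega> * QQ b \<omega> \<partial>PP b) = real a * real b + 2 * real a * (real a - 1) / real p"
proof (induction b rule: dec_induct)
  case base
  then show ?case using EQ2[of a] by (simp add: power2_eq_square)
next
  case (step b)
  have i: "integrable (PP (Suc b)) (\<lambda>\<omega>. QQ a \<omega> * QQ (Suc b) \<omega>)" using step by (intro intQQ) auto
  have "(\<integral>\<omega>. QQ a \<omega> * QQ (Suc b) \<omega> \<partial>PP (Suc b)) = (\<integral>x. QQ a x * (QQ b x + 1) \<partial>PP b)"
    unfolding Fub[OF i] using step by (simp add: I3)
  also have "\<dots> = (\<integral>x. QQ a x * QQ b x \<partial>PP b) + (\<integral>x. QQ a x \<partial>PP b)"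
    using intQQ[of a b b] intQ[of a b] step by (simp add: distrib_left)
  also have "\<dots> = real a * real b + 2 * real a * (real a - 1) / real p + a" using step by (simp add: EQ_lift)
  also have "\<dots> = real a * real (Suc b) + 2 * real a * (real a - 1) / real p" by (simp add: algebra_simps)
  finally show ?case .
qed

lemma EQQ_lift: "a \<le> b \<Longrightarrow> b \<le> m \<Longrightarrow> (\<integral>\<omega>. QQ a \<omega> * QQ b \<omega> \<partial>PP m) = real a * real b + 2 * real a * (real a - 1) / real p"
  using lift[of b "\<lambda>\<omega>. QQ a \<omega> * QQ b \<omega>" m] by (simp add: QQ_upd intQQ EQQ)

lemma EQQ_le: "a \<le> m \<Longrightarrow> b \<le> m \<Longrightarrow> (\<integral>\<omega>. QQ a \<omega> * QQ b \<omega> \<partial>PP m) \<le> real a * real b * (1 + 2 / real p)"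
proof -
  assume am: "a \<le> m" and bm: "b \<le> m"
  have key: "\<And>a b. a \<le> b \<Longrightarrow> b \<le> m \<Longrightarrow> (\<integral>\<omega>. QQ a \<omega> * QQ b \<omega> \<partial>PP m) \<le> real a * real b * (1 + 2 / real p)"
  proof -
    fix a b :: nat assume ab: "a \<le> b" "b \<le> m"
    have "real a - 1 \<le> real b" using ab by simp
    then have "2 * real a * (real a - 1) \<le> 2 * real a * real b" by (intro mult_left_mono) auto
    then have "2 * real a * (real a - 1) / p \<le> 2 * a * b / p"
      using p_pos by (intro divide_right_mono) auto
    then show "(\<integral>\<omega>. QQ a \<omega> * QQ b \<omega> \<partial>PP m) \<le> real a * real b * (1 + 2 / real p)"
      using EQQ_lift[OF ab] ab by (simp add: algebra_simps)
  qed
  show ?thesis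
  proof (cases "a \<le> b")
    case True then show ?thesis using key bm by auto
  next
    case False
    then show ?thesis using key[of b a] am by (simp add: mult.commute)
  qed
qed

lemma EQ2_lift: "a \<le> m \<Longrightarrow> (\<integral>\<omega>. (QQ a \<omega>)^2 \<partial>PP m) \<le> 3 * a^2"
proof -
  assume "a \<le> m"
  then have "(\<integral>\<omega>. (QQ a \<omega>)^2 \<partial>PP m) = real a * real a + 2 * real a * (real a - 1) / real p"
    using EQQ_lift[of a a m] by (simp add: power2_eq_square)
  also have "\<dots> \<le> a * a + 2 * a * a"
  proof -
    have "2 * real a * (real a - 1) / p \<le> 2 * a * (real a - 1)"
      using p_pos by (cases "a = 0") (auto intro!: div_le_self)
    then show ?thesis by (cases "a = 0") (auto simp: of_nat_diff algebra_simps)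
  qed
  finally show ?thesis by (simp add: power2_eq_square)
qed

end


locale clt = sph +
  fixes n :: nat and t :: real
  assumes n_pos: "0 < n"
begin

definition "cc = sqrt (2 * p) / n"
definition "sg i \<omega> = 2 * QQ (i - 1) \<omega> / (real n)^2"
definition "AA j \<omega> = (\<Sum>i\<in>{1..j}. sg i \<omega>)"
definition "gg j \<omega> = (if AA j \<omega> \<le> 2 then 1 else (0::real))"
definition "AT j \<omega> = (\<Sum>i\<in>{1..j}. gg i \<omega> * sg i \<omega>)"
definition "YY i \<omega> = cc * inner_p p (SS (i - 1) \<omega>) (\<omega> i)"
definition "TT j \<omega> = (\<Sum>i\<in>{1..j}. gg i \<omega> * YY i \<omega>)"
definition "WW j \<omega> = iexp (t * TT j \<omega>) * complex_of_real (exp (t^2 / 2 * AT j \<omega>))"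

lemma QQ_nonneg: "QQ k \<omega> \<ge> 0" unfolding QQ_def by (rule inner_p_nonneg)

lemma sg_nonneg: "sg i \<omega> \<ge> 0" unfolding sg_def using QQ_nonneg by simp

lemma gg01: "gg j \<omega> = 0 \<or> gg j \<omega> = 1" by (simp add: gg_def)

lemma AA_Suc: "AA (Suc j) \<omega> = AA j \<omega> + sg (Suc j) \<omega>"
  unfolding AA_def by simp

lemma AT_Suc: "AT (Suc j) \<omega> = AT j \<omega> + gg (Suc j) \<omega> * sg (Suc j) \<omega>"
  unfolding AT_def by simp

lemma TT_Suc: "TT (Suc j) \<omega> = TT j \<omega> + gg (Suc j) \<omega> * YY (Suc j) \<omega>"
  unfolding TT_def by simp

lemma AA_mono: "i \<le> j \<Longrightarrow> AA i \<omega> \<le> AA j \<omega>"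
  unfolding AA_def by (rule sum_mono2) (auto intro: sg_nonneg)

lemma AT_le_AA: "AT j \<omega> \<le> AA j \<omega>"
  unfolding AT_def AA_def by (intro sum_mono) (auto simp: gg_def sg_nonneg)

lemma AT_nonneg: "AT j \<omega> \<ge> 0"
  unfolding AT_def by (intro sum_nonneg) (auto simp: gg_def sg_nonneg)

lemma AT_le2: "AT j \<omega> \<le> 2"
proof (induction j)
  case 0 then show ?case by (simp add: AT_def)
next
  case (Suc j)
  show ?case
  proof (cases "AA (Suc j) \<omega> \<le> 2")
    case True then show ?thesis using AT_le_AA[of "Suc j" \<omega>] by simp
  next
    case False then show ?thesis using Suc by (simp add: AT_Suc gg_def)
  qed
qed

lemma gsg_le2: "gg j \<omega> * sg j \<omega> \<le> 2"
proof (cases "AA j \<omega> \<le> 2")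
  case True
  have "sg j \<omega> \<le> AA j \<omega>" if "1 \<le> j"
    unfolding AA_def using that by (intro member_le_sum) (auto intro: sg_nonneg)
  moreover have "j = 0 \<Longrightarrow> sg j \<omega> \<le> AA j \<omega>" unfolding AA_def sg_def by (simp add: QQ0)
  ultimately show ?thesis using True by (cases "1 \<le> j") (auto simp: gg_def)
qed (simp add: gg_def)

lemma AA_small: "AA j \<omega> \<le> 2 \<Longrightarrow> AT j \<omega> = AA j \<omega> \<and> TT j \<omega> = (\<Sum>i\<in>{1..j}. YY i \<omega>)"
proof -
  assume a: "AA j \<omega> \<le> 2"
  have g: "\<And>i. i \<in> {1..j} \<Longrightarrow> gg i \<omega> = 1"
  proof -
    fix i assume "i \<in> {1..j}"
    then have "AA i \<omega> \<le> AA j \<omega>" by (intro AA_mono) auto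
    then show "gg i \<omega> = 1" using a by (simp add: gg_def)
  qed
  show ?thesis unfolding AT_def AA_def TT_def using g by simp
qed

lemma AT_dev: "\<bar>AT j \<omega> - 1\<bar> \<le> \<bar>AA j \<omega> - 1\<bar>"
proof (cases "AA j \<omega> \<le> 2")
  case True then show ?thesis using AA_small by simp
next
  case False then show ?thesis using AT_le2[of j \<omega>] AT_nonneg[of j \<omega>] by auto
qed

lemma sg_upd: "1 \<le> l \<Longrightarrow> i \<le> l \<Longrightarrow> sg i (x(l := u)) = sg i x"
  unfolding sg_def by (simp add: QQ_upd)

lemma AA_upd: "1 \<le> l \<Longrightarrow> j \<le> l \<Longrightarrow> AA j (x(l := u)) = AA j x"
  unfolding AA_def by (intro sum.cong) (auto simp: sg_upd)

lemma gg_upd: "1 \<le> l \<Longrightarrow> j \<le> l \<Longrightarrow> gg j (x(l := u)) = gg j x"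
  unfolding gg_def by (simp add: AA_upd)

lemma AT_upd: "1 \<le> l \<Longrightarrow> j \<le> l \<Longrightarrow> AT j (x(l := u)) = AT j x"
  unfolding AT_def by (intro sum.cong) (auto simp: sg_upd gg_upd)

lemma YY_upd: "i < l \<Longrightarrow> YY i (x(l := u)) = YY i x"
  unfolding YY_def by (simp add: SS_upd)

lemma TT_upd: "j < l \<Longrightarrow> TT j (x(l := u)) = TT j x"
  unfolding TT_def by (intro sum.cong) (auto simp: YY_upd gg_upd)

lemma WW_upd: "j < l \<Longrightarrow> WW j (x(l := u)) = WW j x"
  unfolding WW_def by (simp add: TT_upd AT_upd)

lemma YY_Suc: "YY (Suc j) (x(Suc j := u)) = cc * inner_p p (SS j x) u"
  unfolding YY_def by (simp add: SS_upd)

lemma WW_Suc: "WW (Suc j) (x(Suc j := u)) =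
    WW j x * complex_of_real (exp (t^2 / 2 * (gg (Suc j) x * sg (Suc j) x)))
      * iexp (t * gg (Suc j) x * cc * inner_p p (SS j x) u)"
proof -
  have g: "gg (Suc j) (x(Suc j := u)) = gg (Suc j) x" by (rule gg_upd) auto
  have s: "sg (Suc j) (x(Suc j := u)) = sg (Suc j) x" by (rule sg_upd) auto
  have tu: "TT j (x(Suc j := u)) = TT j x" by (rule TT_upd) simp
  have au: "AT j (x(Suc j := u)) = AT j x" by (rule AT_upd) auto
  have "WW (Suc j) (x(Suc j := u)) = iexp (t * (TT j x + gg (Suc j) x * (cc * inner_p p (SS j x) u)))
      * complex_of_real (exp (t^2 / 2 * (AT j x + gg (Suc j) x * sg (Suc j) x)))"
    unfolding WW_def TT_Suc AT_Suc g s YY_Suc tu au by simp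
  also have "\<dots> = WW j x * complex_of_real (exp (t^2 / 2 * (gg (Suc j) x * sg (Suc j) x)))
      * iexp (t * gg (Suc j) x * cc * inner_p p (SS j x) u)"
  proof -
    have e1: "iexp (t * (TT j x + gg (Suc j) x * (cc * inner_p p (SS j x) u))) =
        iexp (t * TT j x) * iexp (t * gg (Suc j) x * cc * inner_p p (SS j x) u)"
      by (simp add: distrib_left exp_add mult.assoc)
    have e2: "exp (t^2 / 2 * (AT j x + gg (Suc j) x * sg (Suc j) x)) =
        exp (t^2 / 2 * AT j x) * exp (t^2 / 2 * (gg (Suc j) x * sg (Suc j) x))"
      by (simp add: distrib_left exp_add)
    show ?thesis unfolding WW_def e1 e2 by (simp add: mult_ac)
  qed
  finally show ?thesis .
qed

lemma WW_bound: "cmod (WW j \<omega>) \<le> exp (t^2)"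
proof -
  have "cmod (WW j \<omega>) = exp (t^2 / 2 * AT j \<omega>)"
    unfolding WW_def by (simp add: norm_mult)
  also have "\<dots> \<le> exp (t^2 / 2 * 2)" using AT_le2[of j \<omega>] by (intro exp_le_cancel_iff[THEN iffD2] mult_left_mono) auto
  finally show ?thesis by simp
qed

end


lemma expb: "0 \<le> (h::real) \<Longrightarrow> \<bar>exp h * (1 - h) - 1\<bar> \<le> h^2 * exp h"
proof -
  assume h: "0 \<le> h"
  have a: "1 - h \<le> exp (- h)" using exp_ge_add_one_self[of "-h"] by simp
  have "exp h * (1 - h) \<le> exp h * exp (-h)" using a by (intro mult_left_mono) auto
  then have up: "exp h * (1 - h) \<le> 1" by (simp add: exp_minus)
  have b: "1 + h \<le> exp h" by (rule exp_ge_add_one_self)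
  have "1 \<le> (1 + h) * (1 - h + h^2)" using h by (simp add: power2_eq_square power3_eq_cube algebra_simps)
  also have "\<dots> \<le> exp h * (1 - h + h^2)"
  proof (rule mult_right_mono[OF b])
    have "0 \<le> (h - 1/2)^2 + 3/4" by (simp add: add_nonneg_nonneg)
    then show "0 \<le> 1 - h + h^2" by (simp add: power2_eq_square algebra_simps)
  qed
  finally have lo: "1 - h^2 * exp h \<le> exp h * (1 - h)" by (simp add: algebra_simps)
  show ?thesis using up lo by (simp add: abs_le_iff algebra_simps)
qed

context clt begin

lemma cc2: "cc^2 = 2 * p / (real n)^2"
  unfolding cc_def by (simp add: power_divide)

lemma step_pt:
  "cmod ((CLINT u|\<mu>. WW (Suc j) (x(Suc j := u))) - WW j x) \<le> exp (2 * t^2) * (3/2) * t^4 * (QQ j x)^2 / (real n)^4"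
proof -
  let ?g = "gg (Suc j) x" and ?s = "sg (Suc j) x" and ?Q = "QQ j x"
  define h where "h = t^2 / 2 * (?g * ?s)"
  define C where "C = (CLINT u|\<mu>. iexp (t * ?g * cc * inner_p p (SS j x) u))"
  have int: "(CLINT u|\<mu>. WW (Suc j) (x(Suc j := u))) = WW j x * complex_of_real (exp h) * C"
    unfolding WW_Suc C_def h_def by simp
  have Qn: "?Q \<ge> 0" by (rule QQ_nonneg)
  have hn: "0 \<le> h" unfolding h_def using sg_nonneg[of "Suc j" x] by (simp add: gg_def)
  have ht: "h \<le> t^2" unfolding h_def using gsg_le2[of "Suc j" x] by (simp add: mult_left_mono[of _ 2 "t^2/2", simplified])
  have key: "cmod (complex_of_real (exp h) * C - 1) \<le> exp (t^2) * ((3/2) * t^4 * ?Q^2 / (real n)^4)"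
  proof (cases "?g = 1")
    case False
    then have g0: "?g = 0" using gg01 by blast
    then have "h = 0" "C = 1" unfolding h_def C_def by (simp_all add: P.prob_space)
    then show ?thesis by simp
  next
    case True
    have hQ: "h = t^2 * ?Q / (real n)^2" unfolding h_def sg_def using True by simp
    have cs: "cmod (C - complex_of_real (1 - (t * cc)^2 * ?Q / (2 * p))) \<le> (t * cc)^4 * ?Q^2 / (8 * p^2)"
      using charS[of "t * cc" "SS j x"] True unfolding C_def QQ_def by (simp add: mult.assoc)
    have e1: "(t * cc)^2 * ?Q / (2 * p) = h"
      unfolding hQ power_mult_distrib cc2 using p_pos by (simp add: field_simps)
    have e2: "(t * cc)^4 * ?Q^2 / (8 * p^2) = t^4 * ?Q^2 / (2 * (real n)^4)"
    proof -
      have "cc^4 = (cc^2)^2" by (simp flip: power_mult)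
      then have "cc^4 = 4 * p^2 / (real n)^4" unfolding cc2 by (simp add: power_divide power_mult_distrib)
      then show ?thesis unfolding power_mult_distrib using p_pos by (simp add: field_simps)
    qed
    have "complex_of_real (exp h) * C - 1 = complex_of_real (exp h) * (C - complex_of_real (1 - h))
        + complex_of_real (exp h * (1 - h) - 1)"
      by (simp add: algebra_simps)
    then have "cmod (complex_of_real (exp h) * C - 1) \<le> exp h * cmod (C - complex_of_real (1 - h)) + \<bar>exp h * (1 - h) - 1\<bar>"
      by (metis norm_triangle_ineq norm_mult norm_of_real abs_exp_cancel)
    also have "\<dots> \<le> exp h * (t^4 * ?Q^2 / (2 * (real n)^4)) + h^2 * exp h"
      using cs e1 e2 expb[OF hn] by (intro add_mono mult_left_mono) auto
    also have "\<dots> \<le> exp (t^2) * (t^4 * ?Q^2 / (2 * (real n)^4)) + (t^2 * ?Q / (real n)^2)^2 * exp (t^2)"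
    proof (intro add_mono mult_left_mono mult_mono)
      show "exp h \<le> exp (t^2)" using ht by simp
      show "h^2 \<le> (t^2 * ?Q / (real n)^2)^2" using hQ by simp
    qed (use Qn ht hn in auto)
    also have "\<dots> = exp (t^2) * ((3/2) * t^4 * ?Q^2 / (real n)^4)"
      by (simp add: power_mult_distrib power_divide field_simps)
    finally show ?thesis .
  qed
  have "cmod ((CLINT u|\<mu>. WW (Suc j) (x(Suc j := u))) - WW j x)
      = cmod (WW j x) * cmod (complex_of_real (exp h) * C - 1)"
    unfolding int by (simp add: algebra_simps norm_mult[symmetric])
  also have "\<dots> \<le> exp (t^2) * (exp (t^2) * ((3/2) * t^4 * ?Q^2 / (real n)^4))"
    by (intro mult_mono WW_bound key) auto
  also have "\<dots> = exp (2 * t^2) * (3/2) * t^4 * ?Q^2 / (real n)^4"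
  proof -
    have "exp (t^2) * exp (t^2) = exp (2 * t^2)" by (simp add: mult_exp_exp)
    then show ?thesis by (simp add: algebra_simps)
  qed
  finally show ?thesis .
qed

end


lemma norm_int_le:
  fixes f :: "'a \<Rightarrow> 'b::{banach, second_countable_topology}"
  assumes b: "\<And>x. x \<in> space M \<Longrightarrow> norm (f x) \<le> g x" and g: "integrable M g"
  shows "norm (integral\<^sup>L M f) \<le> integral\<^sup>L M g"
proof (cases "integrable M f")
  case True
  have "norm (integral\<^sup>L M f) \<le> (\<integral>x. norm (f x) \<partial>M)" by (rule integral_norm_bound)
  also have "\<dots> \<le> integral\<^sup>L M g" using True g b by (intro integral_mono) auto
  finally show ?thesis .
next
  case False
  then have "integral\<^sup>L M f = 0" by (rule not_integrable_integral_eq)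
  moreover have "0 \<le> integral\<^sup>L M g" using b by (intro integral_nonneg_AE AE_I2) (auto intro: order_trans[OF norm_ge_zero])
  ultimately show ?thesis by simp
qed

context clt begin

lemma meas_sg: "i \<le> m \<Longrightarrow> sg i \<in> borel_measurable (PP m)"
  unfolding sg_def by (intro borel_measurable_divide borel_measurable_times borel_measurable_const meas_QQ) auto

lemma meas_AA: "j \<le> m \<Longrightarrow> AA j \<in> borel_measurable (PP m)"
  unfolding AA_def by (intro borel_measurable_sum meas_sg) auto

lemma meas_gg: "j \<le> m \<Longrightarrow> gg j \<in> borel_measurable (PP m)"
proof -
  assume "j \<le> m"
  note meas_AA[OF this, measurable]
  show ?thesis unfolding gg_def by measurable
qed

lemma meas_AT: "j \<le> m \<Longrightarrow> AT j \<in> borel_measurable (PP m)"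
  unfolding AT_def by (intro borel_measurable_sum borel_measurable_times meas_sg meas_gg) auto

lemma meas_YY: "1 \<le> i \<Longrightarrow> i \<le> m \<Longrightarrow> YY i \<in> borel_measurable (PP m)"
proof -
  assume i: "1 \<le> i" "i \<le> m"
  then obtain k where k: "i = Suc k" by (cases i) auto
  show ?thesis unfolding YY_def k using meas_G[of k m] i k by simp
qed

lemma meas_TT: "j \<le> m \<Longrightarrow> TT j \<in> borel_measurable (PP m)"
  unfolding TT_def by (intro borel_measurable_sum borel_measurable_times meas_YY meas_gg) auto

lemma meas_WW: "j \<le> m \<Longrightarrow> WW j \<in> borel_measurable (PP m)"
proof -
  assume "j \<le> m"
  note meas_TT[OF this, measurable] meas_AT[OF this, measurable]
  show ?thesis unfolding WW_def by measurable
qed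

lemma int_WW: "j \<le> m \<Longrightarrow> integrable (PP m) (WW j)"
proof -
  assume j: "j \<le> m"
  interpret Q: prob_space "PP m" by (rule prob_PP)
  show ?thesis by (rule Q.integrable_const_bound[where B="exp (t^2)"]) (auto intro!: AE_I2 WW_bound meas_WW j)
qed

lemma meas_upd_mu: "x \<in> space (PP j) \<Longrightarrow> (\<lambda>u. x(Suc j := u)) \<in> measurable \<mu> (PP (Suc j))"
proof -
  assume x: "x \<in> space (PP j)"
  have e: "{1..Suc j} = insert (Suc j) {1..j}" by auto
  show ?thesis using measurable_component_update[of x "{1..j}" "\<lambda>_. \<mu>" "Suc j"] x
    unfolding PP_def e by simp
qed

lemma inner_int: "x \<in> space (PP j) \<Longrightarrow> f \<in> borel_measurable (PP (Suc j)) \<Longrightarrow> (\<And>y. cmod (f y) \<le> B) \<Longrightarrow>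
    integrable \<mu> (\<lambda>u. f (x(Suc j := u)) :: complex)"
  by (rule P.integrable_const_bound[where B=B]) (auto intro!: AE_I2 measurable_comp[OF meas_upd_mu, unfolded comp_def])

lemma tele_step:
  "cmod ((CLINT x|PP (Suc j). WW (Suc j) x) - (CLINT x|PP j. WW j x)) \<le> exp (2 * t^2) * (3/2) * t^4 * (3 * (real j)^2) / (real n)^4"
proof -
  define K where "K = exp (2 * t^2) * (3/2) * t^4 / (real n)^4"
  have i1: "integrable (PP (Suc j)) (WW (Suc j))" by (rule int_WW) simp
  have i0: "integrable (PP (Suc j)) (WW j)" by (rule int_WW) simp
  have l: "(CLINT x|PP j. WW j x) = (CLINT x|PP (Suc j). WW j x)"
    unfolding Fub[OF i0] WW_upd[of j "Suc j", OF lessI] by (simp add: P.prob_space)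
  have "(CLINT x|PP (Suc j). WW (Suc j) x) - (CLINT x|PP j. WW j x) = (CLINT x|PP (Suc j). WW (Suc j) x - WW j x)"
    unfolding l using i1 i0 by simp
  also have "\<dots> = (CLINT x|PP j. (CLINT u|\<mu>. WW (Suc j) (x(Suc j := u)) - WW j (x(Suc j := u))))"
    using i1 i0 by (intro Fub) auto
  also have "\<dots> = (CLINT x|PP j. (CLINT u|\<mu>. WW (Suc j) (x(Suc j := u))) - WW j x)"
  proof (rule Bochner_Integration.integral_cong[OF refl])
    fix x assume x: "x \<in> space (PP j)"
    have a: "integrable \<mu> (\<lambda>u. WW (Suc j) (x(Suc j := u)))"
      by (rule inner_int[OF x, where B="exp (t^2)"]) (auto intro: meas_WW WW_bound)
    show "(CLINT u|\<mu>. WW (Suc j) (x(Suc j := u)) - WW j (x(Suc j := u))) = (CLINT u|\<mu>. WW (Suc j) (x(Suc j := u))) - WW j x"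
      using a by (simp add: WW_upd P.prob_space)
  qed
  finally have eq: "(CLINT x|PP (Suc j). WW (Suc j) x) - (CLINT x|PP j. WW j x) = (CLINT x|PP j. (CLINT u|\<mu>. WW (Suc j) (x(Suc j := u))) - WW j x)" .
  have "cmod (CLINT x|PP j. (CLINT u|\<mu>. WW (Suc j) (x(Suc j := u))) - WW j x) \<le> (\<integral>x. K * (QQ j x)^2 \<partial>PP j)"
  proof (rule norm_int_le)
    show "integrable (PP j) (\<lambda>x. K * (QQ j x)^2)"
      using intQQ[of j j j] by (simp add: power2_eq_square)
    fix x show "cmod ((CLINT u|\<mu>. WW (Suc j) (x(Suc j := u))) - WW j x) \<le> K * (QQ j x)^2"
      using step_pt[of j x] unfolding K_def by simp
  qed
  also have "\<dots> = K * (\<integral>x. (QQ j x)^2 \<partial>PP j)" by simp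
  also have "\<dots> \<le> K * (3 * (real j)^2)"
    using EQ2_lift[of j j] by (intro mult_left_mono) (auto simp: K_def)
  finally show ?thesis unfolding eq K_def by simp
qed

end


lemma gsum: "(\<Sum>a<n. real a) = real n * (real n - 1) / 2"
  by (induction n) (simp_all add: field_simps)

lemma sqsum: "(\<Sum>j<m. real j ^ 2) \<le> real m ^ 3"
proof -
  have "(\<Sum>j<m. real j ^ 2) \<le> (\<Sum>j<m. real m ^ 2)" by (intro sum_mono power_mono) auto
  also have "\<dots> = real m ^ 3" by (simp add: power2_eq_square power3_eq_cube)
  finally show ?thesis .
qed

context clt begin

lemma WW0: "WW 0 x = 1" by (simp add: WW_def TT_def AT_def)

lemma tele: "cmod ((CLINT x|PP m. WW m x) - 1) \<le> (\<Sum>j<m. exp (2 * t^2) * (3/2) * t^4 * (3 * (real j)^2) / (real n)^4)"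
proof (induction m)
  case 0
  interpret Q: prob_space "PP 0" by (rule prob_PP)
  show ?case by (simp add: WW0 Q.prob_space)
next
  case (Suc m)
  have "cmod ((CLINT x|PP (Suc m). WW (Suc m) x) - 1) \<le> cmod ((CLINT x|PP (Suc m). WW (Suc m) x) - (CLINT x|PP m. WW m x)) + cmod ((CLINT x|PP m. WW m x) - 1)"
  proof -
    have "(CLINT x|PP (Suc m). WW (Suc m) x) - 1 = ((CLINT x|PP (Suc m). WW (Suc m) x) - (CLINT x|PP m. WW m x)) + ((CLINT x|PP m. WW m x) - 1)"
      by simp
    then show ?thesis by (metis norm_triangle_ineq)
  qed
  also have "\<dots> \<le> exp (2 * t^2) * (3/2) * t^4 * (3 * (real m)^2) / (real n)^4 + (\<Sum>j<m. exp (2 * t^2) * (3/2) * t^4 * (3 * (real j)^2) / (real n)^4)"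
    by (intro add_mono tele_step Suc)
  finally show ?case by (simp add: add.commute)
qed

lemma tele_n: "cmod ((CLINT x|PP n. WW n x) - 1) \<le> 9 / 2 * exp (2 * t^2) * t^4 / n"
proof -
  have "(\<Sum>j<n. exp (2 * t^2) * (3/2) * t^4 * (3 * (real j)^2) / (real n)^4)
      = (exp (2 * t^2) * (9/2) * t^4 / (real n)^4) * (\<Sum>j<n. (real j)^2)"
    by (subst sum_distrib_left) (rule sum.cong, auto simp: field_simps)
  also have "\<dots> \<le> (exp (2 * t^2) * (9/2) * t^4 / (real n)^4) * real n ^ 3"
    by (intro mult_left_mono sqsum) auto
  also have "\<dots> = 9 / 2 * exp (2 * t^2) * t^4 / n"
    using n_pos by (simp add: power_eq_if field_simps)
  finally show ?thesis using tele[of n] by linarith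
qed

lemma AA_alt: "AA n \<omega> = 2 / (real n)^2 * (\<Sum>a<n. QQ a \<omega>)"
  unfolding AA_def sg_def by (simp add: sum.atLeast1_atMost_eq sum_distrib_left)

lemma AA_sq: "(AA n \<omega>)^2 = (2 / (real n)^2)^2 * (\<Sum>a<n. \<Sum>b<n. QQ a \<omega> * QQ b \<omega>)"
proof -
  have "(\<Sum>a<n. QQ a \<omega>)^2 = (\<Sum>a<n. \<Sum>b<n. QQ a \<omega> * QQ b \<omega>)"
    by (simp add: power2_eq_square sum_product)
  then show ?thesis unfolding AA_alt power_mult_distrib by simp
qed

lemma intAA: "integrable (PP n) (AA n)"
  unfolding AA_alt by (intro integrable_mult_right Bochner_Integration.integrable_sum intQ) auto

lemma intAA2: "integrable (PP n) (\<lambda>\<omega>. (AA n \<omega>)^2)"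
proof -
  have "(\<lambda>\<omega>. (AA n \<omega>)^2) = (\<lambda>\<omega>. (2 / (real n)^2)^2 * (\<Sum>a<n. \<Sum>b<n. QQ a \<omega> * QQ b \<omega>))"
    by (simp only: AA_sq)
  then show ?thesis
    by (simp only:) (intro integrable_mult_right Bochner_Integration.integrable_sum intQQ, auto)
qed

lemma EAA: "(\<integral>\<omega>. AA n \<omega> \<partial>PP n) = (real n - 1) / real n"
proof -
  have "(\<integral>\<omega>. AA n \<omega> \<partial>PP n) = 2 / (real n)^2 * (\<Sum>a<n. \<integral>\<omega>. QQ a \<omega> \<partial>PP n)"
    unfolding AA_alt integral_mult_right_zero
    by (subst Bochner_Integration.integral_sum) (auto intro: intQ)
  also have "(\<Sum>a<n. \<integral>\<omega>. QQ a \<omega> \<partial>PP n) = (\<Sum>a<n. real a)"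
    by (intro sum.cong refl EQ_lift) auto
  also have "2 / (real n)^2 * (\<Sum>a<n. real a) = (real n - 1) / real n"
    unfolding gsum using n_pos by (simp add: power2_eq_square field_simps)
  finally show ?thesis .
qed

lemma EAA2: "(\<integral>\<omega>. (AA n \<omega>)^2 \<partial>PP n) \<le> (1 + 2 / p) * ((real n - 1) / real n)^2"
proof -
  have "(\<integral>\<omega>. (AA n \<omega>)^2 \<partial>PP n) = (2 / (real n)^2)^2 * (\<Sum>a<n. \<Sum>b<n. \<integral>\<omega>. QQ a \<omega> * QQ b \<omega> \<partial>PP n)"
  proof -
    have "(\<lambda>\<omega>. (AA n \<omega>)^2) = (\<lambda>\<omega>. (2 / (real n)^2)^2 * (\<Sum>a<n. \<Sum>b<n. QQ a \<omega> * QQ b \<omega>))"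
      by (simp only: AA_sq)
    moreover have "(\<integral>\<omega>. (\<Sum>a<n. \<Sum>b<n. QQ a \<omega> * QQ b \<omega>) \<partial>PP n) = (\<Sum>a<n. \<Sum>b<n. \<integral>\<omega>. QQ a \<omega> * QQ b \<omega> \<partial>PP n)"
    proof -
      have "(\<integral>\<omega>. (\<Sum>a<n. \<Sum>b<n. QQ a \<omega> * QQ b \<omega>) \<partial>PP n) = (\<Sum>a<n. \<integral>\<omega>. (\<Sum>b<n. QQ a \<omega> * QQ b \<omega>) \<partial>PP n)"
        by (rule Bochner_Integration.integral_sum) (auto intro!: Bochner_Integration.integrable_sum intQQ)
      also have "\<dots> = (\<Sum>a<n. \<Sum>b<n. \<integral>\<omega>. QQ a \<omega> * QQ b \<omega> \<partial>PP n)"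
        by (intro sum.cong refl Bochner_Integration.integral_sum intQQ) auto
      finally show ?thesis .
    qed
    ultimately show ?thesis by simp
  qed
  also have "\<dots> \<le> (2 / (real n)^2)^2 * (\<Sum>a<n. \<Sum>b<n. real a * real b * (1 + 2 / p))"
    by (intro mult_left_mono sum_mono EQQ_le) auto
  also have "(\<Sum>a<n. \<Sum>b<n. real a * real b * (1 + 2 / p)) = (1 + 2 / p) * (\<Sum>a<n. real a)^2"
    by (simp add: power2_eq_square sum_product sum_distrib_left sum_distrib_right algebra_simps)
  also have "(2 / (real n)^2)^2 * ((1 + 2 / p) * (\<Sum>a<n. real a)^2) = (1 + 2 / p) * ((real n - 1) / real n)^2"
  proof -
    have "(2 / (real n)^2)^2 * (\<Sum>a<n. real a)^2 = ((real n - 1) / real n)^2"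
      unfolding gsum using n_pos by (simp add: power2_eq_square field_simps)
    then show ?thesis by (simp add: algebra_simps)
  qed
  finally show ?thesis .
qed

lemma var_AA: "(\<integral>\<omega>. (AA n \<omega> - 1)^2 \<partial>PP n) \<le> 1 / (real n)^2 + 2 / p"
proof -
  interpret Q: prob_space "PP n" by (rule prob_PP)
  define x where "x = (real n - 1) / real n"
  have x01: "0 \<le> x" "x \<le> 1" unfolding x_def using n_pos by auto
  have "(\<integral>\<omega>. (AA n \<omega> - 1)^2 \<partial>PP n) = (\<integral>\<omega>. (AA n \<omega>)^2 \<partial>PP n) - 2 * (\<integral>\<omega>. AA n \<omega> \<partial>PP n) + 1"
  proof -
    have "(\<lambda>\<omega>. (AA n \<omega> - 1)^2) = (\<lambda>\<omega>. ((AA n \<omega>)^2 - 2 * AA n \<omega>) + 1)"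
      by (simp add: power2_eq_square algebra_simps)
    then show ?thesis using intAA intAA2 by (simp add: Q.prob_space)
  qed
  also have "\<dots> \<le> (1 + 2 / p) * x^2 - 2 * x + 1"
    using EAA2 EAA unfolding x_def by simp
  also have "\<dots> = (1 - x)^2 + 2 / p * x^2" by (simp add: power2_eq_square algebra_simps)
  also have "\<dots> \<le> 1 / (real n)^2 + 2 / p"
  proof (rule add_mono)
    show "(1 - x)^2 \<le> 1 / (real n)^2" unfolding x_def using n_pos by (simp add: field_simps power2_eq_square)
    have "x^2 \<le> 1" using x01 by (simp add: power_le_one)
    then have "2 / p * x^2 \<le> 2 / p * 1" using p_pos by (intro mult_left_mono) auto
    then show "2 / p * x^2 \<le> 2 / p" by simp
  qed
  finally show ?thesis .
qed

end


lemma exp_sub1: fixes y :: real shows "\<bar>exp y - 1\<bar> \<le> \<bar>y\<bar> * exp \<bar>y\<bar>"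
proof (cases "y \<ge> 0")
  case True
  have "1 - y \<le> exp (-y)" using exp_ge_add_one_self[of "-y"] by simp
  then have "(1 - y) * exp y \<le> 1" using exp_minus_inverse[of y] by (metis exp_gt_zero mult_right_mono less_le mult.commute)
  then have "exp y - 1 \<le> y * exp y" by (simp add: algebra_simps)
  then show ?thesis using True by simp
next
  case False
  have h1: "1 - exp y \<le> - y" using exp_ge_add_one_self[of y] by linarith
  have e: "1 \<le> exp (- y)" using False by simp
  have h2: "- y \<le> - y * exp (- y)" using mult_left_mono[OF e, of "-y"] False by simp
  have "exp y \<le> 1" using False by simp
  then have a: "\<bar>exp y - 1\<bar> = 1 - exp y" by simp
  have b: "\<bar>y\<bar> * exp \<bar>y\<bar> = - y * exp (- y)" using False by simp
  show ?thesis unfolding a b using h1 h2 by linarith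
qed

lemma abs_le_delta: "0 < (d::real) \<Longrightarrow> \<bar>z\<bar> \<le> d + z^2 / d"
proof -
  assume d: "0 < d"
  show ?thesis
  proof (cases "\<bar>z\<bar> \<le> d")
    case True then show ?thesis using d by (simp add: add_increasing2)
  next
    case False
    then have "\<bar>z\<bar> * d \<le> \<bar>z\<bar> * \<bar>z\<bar>" using d by (intro mult_left_mono) auto
    then have "\<bar>z\<bar> \<le> z^2 / d" using d by (simp add: field_simps power2_eq_square)
    then show ?thesis using d by simp
  qed
qed

context clt begin

definition "stat \<omega> = (real p / real n * (\<Sum>i\<in>{1..n}. \<Sum>j\<in>{1..n}. inner_p p (\<omega> i) (\<omega> j)) - real p) / sqrt (2 * real p)"

definition "Tm \<omega> = (\<Sum>i\<in>{1..n}. YY i \<omega>)"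

lemma SS_Suc_gen: "SS (Suc k) \<omega> = (\<lambda>c. SS k \<omega> c + \<omega> (Suc k) c)"
  unfolding SS_def by (simp add: fun_eq_iff)

lemma QQ_sum: "QQ k \<omega> = (\<Sum>j\<in>{1..k}. 2 * inner_p p (SS (j - 1) \<omega>) (\<omega> j) + inner_p p (\<omega> j) (\<omega> j))"
proof (induction k)
  case 0 then show ?case by (simp add: QQ0)
next
  case (Suc k)
  have "QQ (Suc k) \<omega> = QQ k \<omega> + 2 * inner_p p (SS k \<omega>) (\<omega> (Suc k)) + inner_p p (\<omega> (Suc k)) (\<omega> (Suc k))"
    unfolding QQ_def SS_Suc_gen inner_p_add ..
  then show ?case using Suc by simp
qed

lemma swap3: "(\<Sum>i\<in>I. \<Sum>j\<in>I. \<Sum>c<p. f i j c) = (\<Sum>c<(p::nat). \<Sum>i\<in>I. \<Sum>j\<in>I. (f i j c::real))"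
  apply (subst sum.swap[of _ "{..<p}"])
  apply (subst sum.swap[of _ "{..<p}"])
  apply (rule refl)
  done

lemma double_inner: "(\<Sum>i\<in>{1..n}. \<Sum>j\<in>{1..n}. inner_p p (\<omega> i) (\<omega> j)) = QQ n \<omega>"
  unfolding QQ_def SS_def inner_p_def swap3 by (simp add: sum_product)

lemma stat_ae: "AE \<omega> in PP n. stat \<omega> = Tm \<omega>"
  using ae_PP_unit[of n]
proof (rule AE_mp, intro AE_I2 impI)
  fix \<omega> assume u: "\<forall>i\<in>{1..n}. inner_p p (\<omega> i) (\<omega> i) = 1"
  have "QQ n \<omega> = (\<Sum>j\<in>{1..n}. 2 * inner_p p (SS (j - 1) \<omega>) (\<omega> j) + 1)"
    unfolding QQ_sum using u by (intro sum.cong) auto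
  also have "\<dots> = 2 * (\<Sum>j\<in>{1..n}. inner_p p (SS (j - 1) \<omega>) (\<omega> j)) + n"
    by (simp add: sum.distrib sum_distrib_left)
  finally have q: "QQ n \<omega> = 2 * (\<Sum>j\<in>{1..n}. inner_p p (SS (j - 1) \<omega>) (\<omega> j)) + n" .
  have sq: "sqrt (2 * real p) * sqrt (2 * real p) = 2 * real p" by simp
  have sp: "sqrt (2 * real p) > 0" using p_pos by simp
  show "stat \<omega> = Tm \<omega>"
    unfolding stat_def double_inner q Tm_def YY_def cc_def sum_distrib_left[symmetric]
    using n_pos sp sq by (simp add: field_simps)
qed

lemma meas_stat: "stat \<in> borel_measurable (PP n)"
  unfolding stat_def inner_p_def
  by (intro borel_measurable_divide borel_measurable_diff borel_measurable_times borel_measurable_sum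
      borel_measurable_const meas_comp) auto

lemma meas_Tm: "Tm \<in> borel_measurable (PP n)"
  unfolding Tm_def by (intro borel_measurable_sum meas_YY) auto

end


context clt begin

definition "del = sqrt (1 / (real n)^2 + 2 / p)"

lemma del_pos: "0 < del" unfolding del_def using n_pos p_pos by (simp add: add_pos_pos)

lemma E_abs_AA: "(\<integral>\<omega>. \<bar>AA n \<omega> - 1\<bar> \<partial>PP n) \<le> 2 * del"
proof -
  interpret Q: prob_space "PP n" by (rule prob_PP)
  have i2: "integrable (PP n) (\<lambda>\<omega>. (AA n \<omega> - 1)^2)"
  proof -
    have "(\<lambda>\<omega>. (AA n \<omega> - 1)^2) = (\<lambda>\<omega>. ((AA n \<omega>)^2 - 2 * AA n \<omega>) + 1)"
      by (simp add: power2_eq_square algebra_simps)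
    then show ?thesis using intAA intAA2 by simp
  qed
  have "(\<integral>\<omega>. \<bar>AA n \<omega> - 1\<bar> \<partial>PP n) \<le> (\<integral>\<omega>. del + (AA n \<omega> - 1)^2 / del \<partial>PP n)"
    using intAA i2 by (intro integral_mono abs_le_delta del_pos) auto
  also have "\<dots> = del + (\<integral>\<omega>. (AA n \<omega> - 1)^2 \<partial>PP n) / del"
    using i2 by (simp add: Q.prob_space)
  also have "\<dots> \<le> del + del^2 / del"
    using var_AA del_pos by (intro add_left_mono divide_right_mono) (auto simp: del_def)
  also have "\<dots> = 2 * del" using del_pos by (simp add: power2_eq_square)
  finally show ?thesis .
qed

lemma D1_bound: "cmod (iexp (t * Tm \<omega>) - iexp (t * TT n \<omega>)) \<le> 2 * \<bar>AA n \<omega> - 1\<bar>"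
proof (cases "AA n \<omega> \<le> 2")
  case True then show ?thesis using AA_small[OF True] by (simp add: Tm_def)
next
  case False
  have "cmod (iexp (t * Tm \<omega>) - iexp (t * TT n \<omega>)) \<le> cmod (iexp (t * Tm \<omega>)) + cmod (iexp (t * TT n \<omega>))"
    by (rule norm_triangle_ineq4)
  also have "\<dots> = 2" by (simp add: norm_exp_i_times)
  finally show ?thesis using False by simp
qed

lemma D2_bound: "cmod (iexp (t * TT n \<omega>) - complex_of_real (exp (- (t^2 / 2))) * WW n \<omega>) \<le> t^2 * exp (t^2) * \<bar>AA n \<omega> - 1\<bar>"
proof -
  define y where "y = t^2 / 2 * (AT n \<omega> - 1)"
  have e: "exp (- (t^2 / 2)) * exp (t^2 / 2 * AT n \<omega>) = exp y"
  proof -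
    have "- (t^2 / 2) + t^2 / 2 * AT n \<omega> = t^2 / 2 * (AT n \<omega> - 1)" by (simp add: algebra_simps)
    then show ?thesis unfolding y_def mult_exp_exp by simp
  qed
  have "iexp (t * TT n \<omega>) - complex_of_real (exp (- (t^2 / 2))) * WW n \<omega>
      = iexp (t * TT n \<omega>) * (1 - complex_of_real (exp (- (t^2 / 2)) * exp (t^2 / 2 * AT n \<omega>)))"
    unfolding WW_def by (simp add: algebra_simps)
  then have "cmod (iexp (t * TT n \<omega>) - complex_of_real (exp (- (t^2 / 2))) * WW n \<omega>) = \<bar>exp y - 1\<bar>"
  proof -
    have c: "cmod (1 - complex_of_real (exp y)) = \<bar>exp y - 1\<bar>"
      by (metis norm_of_real of_real_1 of_real_diff abs_minus_commute)
    assume h: "iexp (t * TT n \<omega>) - complex_of_real (exp (- (t^2 / 2))) * WW n \<omega>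
      = iexp (t * TT n \<omega>) * (1 - complex_of_real (exp (- (t^2 / 2)) * exp (t^2 / 2 * AT n \<omega>)))"
    show ?thesis unfolding h e norm_mult c by (simp add: norm_exp_i_times)
  qed
  also have "\<dots> \<le> \<bar>y\<bar> * exp \<bar>y\<bar>" by (rule exp_sub1)
  also have "\<dots> \<le> (t^2 * \<bar>AA n \<omega> - 1\<bar>) * exp (t^2)"
  proof (rule mult_mono)
    have a: "\<bar>AT n \<omega> - 1\<bar> \<le> 1" using AT_le2[of n \<omega>] AT_nonneg[of n \<omega>] by auto
    show "\<bar>y\<bar> \<le> t^2 * \<bar>AA n \<omega> - 1\<bar>"
    proof -
      have X: "t^2 * \<bar>AT n \<omega> - 1\<bar> \<le> t^2 * \<bar>AA n \<omega> - 1\<bar>" using AT_dev[of n \<omega>] by (intro mult_left_mono) auto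
      have Y: "0 \<le> t^2 * \<bar>AA n \<omega> - 1\<bar>" by simp
      have eq: "\<bar>y\<bar> = (t^2 * \<bar>AT n \<omega> - 1\<bar>) / 2" unfolding y_def by (simp add: abs_mult)
      show ?thesis unfolding eq using X Y by linarith
    qed
    have "\<bar>y\<bar> = t^2 / 2 * \<bar>AT n \<omega> - 1\<bar>" unfolding y_def by (simp add: abs_mult)
    also have "\<dots> \<le> t^2 / 2 * 1" using a by (intro mult_left_mono) auto
    finally have "\<bar>y\<bar> \<le> t^2 / 2 * 1" .
    then show "exp \<bar>y\<bar> \<le> exp (t^2)" by simp
  qed auto
  finally show ?thesis by (simp add: algebra_simps)
qed

end


context clt begin

lemma char_bound:
  "cmod ((CLINT \<omega>|PP n. iexp (t * stat \<omega>)) - complex_of_real (exp (- (t^2 / 2))))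
     \<le> (2 + t^2 * exp (t^2)) * (2 * del) + 9 / 2 * exp (2 * t^2) * t^4 / n"
proof -
  interpret Q: prob_space "PP n" by (rule prob_PP)
  note mTm = meas_Tm and mTT = meas_TT[OF order_refl] and mW = meas_WW[OF order_refl]
  note [measurable] = mTm mTT mW meas_stat
  have iTm: "integrable (PP n) (\<lambda>\<omega>. iexp (t * Tm \<omega>))"
    by (rule Q.integrable_const_bound[where B=1]) (auto simp: norm_exp_i_times)
  have iTT: "integrable (PP n) (\<lambda>\<omega>. iexp (t * TT n \<omega>))"
    by (rule Q.integrable_const_bound[where B=1]) (auto simp: norm_exp_i_times)
  have iW: "integrable (PP n) (WW n)" by (rule int_WW) simp
  define e where "e = complex_of_real (exp (- (t^2 / 2)))"
  have phi: "(CLINT \<omega>|PP n. iexp (t * stat \<omega>)) = (CLINT \<omega>|PP n. iexp (t * Tm \<omega>))"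
  proof (rule integral_cong_AE)
    show "AE \<omega> in PP n. iexp (t * stat \<omega>) = iexp (t * Tm \<omega>)"
      by (rule AE_mp[OF stat_ae]) (intro AE_I2 impI, simp)
  qed measurable
  have d1: "(CLINT \<omega>|PP n. iexp (t * Tm \<omega>)) - (CLINT \<omega>|PP n. iexp (t * TT n \<omega>)) = (CLINT \<omega>|PP n. iexp (t * Tm \<omega>) - iexp (t * TT n \<omega>))"
    using iTm iTT by simp
  have d2: "(CLINT \<omega>|PP n. iexp (t * TT n \<omega>)) - e * (CLINT \<omega>|PP n. WW n \<omega>) = (CLINT \<omega>|PP n. iexp (t * TT n \<omega>) - e * WW n \<omega>)"
    using iTT iW by simp
  have iA: "integrable (PP n) (\<lambda>\<omega>. \<bar>AA n \<omega> - 1\<bar>)" using intAA by auto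
  have b1: "cmod (CLINT \<omega>|PP n. iexp (t * Tm \<omega>) - iexp (t * TT n \<omega>)) \<le> (\<integral>\<omega>. 2 * \<bar>AA n \<omega> - 1\<bar> \<partial>PP n)"
    by (rule norm_int_le) (use iA D1_bound in auto)
  have b2: "cmod (CLINT \<omega>|PP n. iexp (t * TT n \<omega>) - e * WW n \<omega>) \<le> (\<integral>\<omega>. t^2 * exp (t^2) * \<bar>AA n \<omega> - 1\<bar> \<partial>PP n)"
    unfolding e_def by (rule norm_int_le) (use iA D2_bound in auto)
  have b3: "cmod (e * ((CLINT \<omega>|PP n. WW n \<omega>) - 1)) \<le> 9 / 2 * exp (2 * t^2) * t^4 / n"
  proof -
    have "cmod e \<le> 1" unfolding e_def by simp
    then have "cmod (e * ((CLINT \<omega>|PP n. WW n \<omega>) - 1)) \<le> 1 * cmod ((CLINT \<omega>|PP n. WW n \<omega>) - 1)"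
      unfolding norm_mult by (intro mult_right_mono) auto
    then show ?thesis using tele_n by simp
  qed
  have "(CLINT \<omega>|PP n. iexp (t * stat \<omega>)) - e =
      (CLINT \<omega>|PP n. iexp (t * Tm \<omega>) - iexp (t * TT n \<omega>)) + (CLINT \<omega>|PP n. iexp (t * TT n \<omega>) - e * WW n \<omega>)
      + e * ((CLINT \<omega>|PP n. WW n \<omega>) - 1)"
    unfolding phi d1[symmetric] d2[symmetric] by (simp add: algebra_simps)
  then have "cmod ((CLINT \<omega>|PP n. iexp (t * stat \<omega>)) - e) \<le>
      cmod (CLINT \<omega>|PP n. iexp (t * Tm \<omega>) - iexp (t * TT n \<omega>)) + cmod (CLINT \<omega>|PP n. iexp (t * TT n \<omega>) - e * WW n \<omega>)
      + cmod (e * ((CLINT \<omega>|PP n. WW n \<omega>) - 1))"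
  proof -
    fix A B C :: complex
    have t3: "\<And>A B C :: complex. cmod (A + B + C) \<le> cmod A + cmod B + cmod C"
    proof -
      fix A B C :: complex
      have "cmod (A + B + C) \<le> cmod (A + B) + cmod C" by (rule norm_triangle_ineq)
      moreover have "cmod (A + B) \<le> cmod A + cmod B" by (rule norm_triangle_ineq)
      ultimately show "cmod (A + B + C) \<le> cmod A + cmod B + cmod C" by linarith
    qed
    assume h: "(CLINT \<omega>|PP n. iexp (t * stat \<omega>)) - e =
      (CLINT \<omega>|PP n. iexp (t * Tm \<omega>) - iexp (t * TT n \<omega>)) + (CLINT \<omega>|PP n. iexp (t * TT n \<omega>) - e * WW n \<omega>)
      + e * ((CLINT \<omega>|PP n. WW n \<omega>) - 1)"
    show ?thesis unfolding h by (rule t3)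
  qed
  also have "\<dots> \<le> (\<integral>\<omega>. 2 * \<bar>AA n \<omega> - 1\<bar> \<partial>PP n) + (\<integral>\<omega>. t^2 * exp (t^2) * \<bar>AA n \<omega> - 1\<bar> \<partial>PP n)
      + 9 / 2 * exp (2 * t^2) * t^4 / n"
    using b1 b2 b3 by linarith
  also have "(\<integral>\<omega>. 2 * \<bar>AA n \<omega> - 1\<bar> \<partial>PP n) + (\<integral>\<omega>. t^2 * exp (t^2) * \<bar>AA n \<omega> - 1\<bar> \<partial>PP n)
      = (2 + t^2 * exp (t^2)) * (\<integral>\<omega>. \<bar>AA n \<omega> - 1\<bar> \<partial>PP n)"
    by (simp add: algebra_simps)
  also have "\<dots> \<le> (2 + t^2 * exp (t^2)) * (2 * del)"
    by (intro mult_left_mono E_abs_AA) auto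
  finally show ?thesis unfolding e_def by simp
qed

end


theorem theorem1:
  fixes p :: "nat \<Rightarrow> nat"
    and M :: "nat \<Rightarrow> 'a measure"
    and U :: "nat \<Rightarrow> nat \<Rightarrow> 'a \<Rightarrow> (nat \<Rightarrow> real)"
  assumes p_pos: "\<And>n. p n > 0"
    and p_lim: "filterlim p at_top sequentially"
    and prob: "\<And>n. prob_space (M n)"
    and indep: "\<And>n. prob_space.indep_vars (M n) (\<lambda>_. euclid_space (p n)) (U n) {1..n}"
    and unif: "\<And>n i. i \<in> {1..n} \<Longrightarrow> distr (M n) (euclid_space (p n)) (U n i) = unif_sphere (p n)"
  shows "weak_conv_m
           (\<lambda>n. distr (M n) borel
              (\<lambda>\<omega>. (real (p n) / real n * (\<Sum>i\<in>{1..n}. \<Sum>j\<in>{1..n}. inner_p (p n) (U n i \<omega>) (U n j \<omega>))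
                     - real (p n)) / sqrt (2 * real (p n))))
           std_normal_distribution"
proof -
  define f where "f n \<omega> = (real (p n) / real n * (\<Sum>i\<in>{1..n}. \<Sum>j\<in>{1..n}. inner_p (p n) (U n i \<omega>) (U n j \<omega>))
                     - real (p n)) / sqrt (2 * real (p n))" for n \<omega>
  define B where "B n t = (2 + t^2 * exp (t^2)) * (2 * sqrt (1 / (real n)^2 + 2 / real (p n))) + 9 / 2 * exp (2 * t^2) * t^4 / real n" for n t
  have rv: "\<And>n i. i \<in> {1..n} \<Longrightarrow> U n i \<in> measurable (M n) (euclid_space (p n))"
    using indep prob unfolding prob_space.indep_vars_def[OF prob] by blast
  have fm: "\<And>n. f n \<in> borel_measurable (M n)"
  proof -
    fix n
    have c: "\<And>i c. i \<in> {1..n} \<Longrightarrow> c < p n \<Longrightarrow> (\<lambda>\<omega>. U n i \<omega> c) \<in> borel_measurable (M n)"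
      using measurable_comp[OF rv meas_coord] by (auto simp: comp_def)
    show "f n \<in> borel_measurable (M n)"
      unfolding f_def inner_p_def
      by (intro borel_measurable_divide borel_measurable_diff borel_measurable_times borel_measurable_sum
          borel_measurable_const c) auto
  qed
  have rd: "\<And>n. real_distribution (distr (M n) borel (f n))"
    using prob fm by (auto simp: real_distribution_def real_distribution_axioms_def intro: prob_space.prob_space_distr)
  have key: "\<And>n t. 0 < n \<Longrightarrow> cmod (char (distr (M n) borel (f n)) t - complex_of_real (exp (- (t^2 / 2)))) \<le> B n t"
  proof -
    fix n :: nat and t :: real assume n: "0 < n"
    interpret C: clt "p n" n t by unfold_locales (simp_all add: p_pos n)
    interpret Mn: prob_space "M n" by (rule prob)
    let ?E = "euclid_space (p n)"
    let ?X = "\<lambda>\<omega>. \<lambda>i\<in>{1..n}. U n i \<omega>"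
    have D: "distr (M n) (PiM {1..n} (\<lambda>_. ?E)) ?X = C.PP n"
    proof -
      have "distr (M n) (PiM {1..n} (\<lambda>_. ?E)) ?X = PiM {1..n} (\<lambda>i. distr (M n) ?E (U n i))"
        using Mn.indep_vars_iff_distr_eq_PiM'[of "{1..n}" "U n" "\<lambda>_. ?E"] indep[of n] rv n by auto
      also have "\<dots> = C.PP n" unfolding C.PP_def by (intro PiM_cong refl) (simp add: unif)
      finally show ?thesis .
    qed
    have Xm: "?X \<in> measurable (M n) (PiM {1..n} (\<lambda>_. ?E))"
      by (intro measurable_restrict rv)
    have sets_eq: "sets (C.PP n) = sets (PiM {1..n} (\<lambda>_. ?E))"
      unfolding C.PP_def by (intro sets_PiM_cong) (auto simp: sets_unif)
    have sm: "(\<lambda>\<omega>. iexp (t * C.stat \<omega>)) \<in> borel_measurable (PiM {1..n} (\<lambda>_. ?E))"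
    proof -
      have [measurable]: "C.stat \<in> borel_measurable (PiM {1..n} (\<lambda>_. ?E))"
        using C.meas_stat measurable_cong_sets[OF sets_eq refl] by blast
      show ?thesis by measurable
    qed
    have fX: "\<And>\<omega>. f n \<omega> = C.stat (?X \<omega>)"
      unfolding f_def C.stat_def by (intro arg_cong2[where f="(/)"] refl arg_cong2[where f="(-)"] arg_cong2[where f="(*)"] sum.cong) auto
    have "char (distr (M n) borel (f n)) t = (CLINT \<omega>|M n. iexp (t * f n \<omega>))"
      unfolding char_def using fm by (subst integral_distr) auto
    also have "\<dots> = (CLINT \<omega>|M n. iexp (t * C.stat (?X \<omega>)))" unfolding fX ..
    also have "\<dots> = (CLINT \<omega>|distr (M n) (PiM {1..n} (\<lambda>_. ?E)) ?X. iexp (t * C.stat \<omega>))"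
      by (rule integral_distr[OF Xm sm, symmetric])
    also have "\<dots> = (CLINT \<omega>|C.PP n. iexp (t * C.stat \<omega>))" unfolding D ..
    finally have ch: "char (distr (M n) borel (f n)) t = (CLINT \<omega>|C.PP n. iexp (t * C.stat \<omega>))" .
    show "cmod (char (distr (M n) borel (f n)) t - complex_of_real (exp (- (t^2 / 2)))) \<le> B n t"
      unfolding ch B_def using C.char_bound unfolding C.del_def by simp
  qed
  have conv: "\<And>t. (\<lambda>n. char (distr (M n) borel (f n)) t) \<longlonglongrightarrow> char std_normal_distribution t"
  proof -
    fix t :: real
    have pr: "filterlim (\<lambda>n. real (p n)) at_top sequentially"
      by (rule filterlim_compose[OF filterlim_real_sequentially p_lim])
    have ip: "(\<lambda>n. 2 / real (p n)) \<longlonglongrightarrow> 0"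
      using tendsto_mult[OF tendsto_const[of 2] tendsto_inverse_0_at_top[OF pr]] by (simp add: divide_inverse)
    have in2: "(\<lambda>n. 1 / (real n)^2) \<longlonglongrightarrow> 0"
      using tendsto_mult[OF lim_1_over_n lim_1_over_n] by (simp add: power2_eq_square)
    have s: "(\<lambda>n. sqrt (1 / (real n)^2 + 2 / real (p n))) \<longlonglongrightarrow> 0"
      using tendsto_real_sqrt[OF tendsto_add[OF in2 ip]] by simp
    have Bl: "(\<lambda>n. B n t) \<longlonglongrightarrow> 0"
      unfolding B_def
      using tendsto_add[OF tendsto_mult[OF tendsto_const tendsto_mult[OF tendsto_const s]]
          tendsto_mult[OF tendsto_const[of "9 / 2 * exp (2 * t^2) * t^4"] lim_1_over_n]]
      by simp
    have "(\<lambda>n. char (distr (M n) borel (f n)) t - complex_of_real (exp (- (t^2 / 2)))) \<longlonglongrightarrow> 0"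
    proof (rule Lim_null_comparison[OF _ Bl])
      show "\<forall>\<^sub>F n in sequentially. cmod (char (distr (M n) borel (f n)) t - complex_of_real (exp (- (t^2 / 2)))) \<le> B n t"
        using eventually_gt_at_top[of "0::nat"] by eventually_elim (rule key)
    qed
    then have "(\<lambda>n. char (distr (M n) borel (f n)) t) \<longlonglongrightarrow> complex_of_real (exp (- (t^2 / 2)))"
      by (rule LIM_zero_cancel)
    then show "(\<lambda>n. char (distr (M n) borel (f n)) t) \<longlonglongrightarrow> char std_normal_distribution t"
      by (simp add: char_std_normal_distribution)
  qed
  have "weak_conv_m (\<lambda>n. distr (M n) borel (f n)) std_normal_distribution"
    by (rule levy_continuity[OF rd real_dist_normal_dist conv])
  then show ?thesis unfolding f_def .
qed


end
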